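(* Let $D$ be a connected ribbon with $n$ boxes and length $\ell$, and write $\mathfrak r_D=\sum_{\lambda\in OP(n)}c_\lambda p_\lambda$. Then: (a) $\sum_{\lambda\in OP(n)}c_\lambda=2$. (b) If $n$ is odd, then $c_{(n)}=(-1)^{\ell+1}\,2/n$. (c) If $\alpha_1(D)=1$ and $\alpha_\ell(D)>1$, then $\sum_{\lambda\in OP(n)}m_1(\lambda)c_\lambda=8c(D)$. (d) If $\alpha_1(D)=\alpha_\ell(D)=1$ and $n\ge2$, then $\sum_{\lambda\in OP(n)}m_1(\lambda)c_\lambda=8c(D)-4$.
   Context: Boxes $(i,j)$ are indexed by row $i$ (top to bottom) and column $j$. A connected ribbon $D$ of composition $\alpha(D)=(\alpha_1(D),\dots,\alpha_\ell(D))$ has $\alpha_r(D)$ consecutive boxes in row $r$, with the leftmost box of row $r$ directly above the rightmost box of row $r+1$; $\ell$ is its length. A box $(i,j)$ of $D$ is a corner if $(i-1,j)\in D$ and $(i+1,j)\notin D$; $c(D)$ is the number of corners. $\mathfrak r_D=\sum_T x^{c(T)}$ over fillings $T$ of $D$ with letters of $\{1'<1<2'<2<\cdots\}$ having rows and columns weakly increasing, at most one unmarked $k$ per column and at most one marked $k'$ per row; $c(T)_i$ counts entries $i$ or $i'$. $\mathfrak r_D$ expands uniquely in $\{p_\lambda:\lambda\in OP(n)\}$, $OP(n)$ being partitions of $n$ into odd parts; $m_1(\lambda)$ is the number of parts of $\lambda$ equal to $1$. *)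

theory Defs
  imports Complex_Main
begin

(* A connected ribbon is given by its composition alpha = [alpha_1,...,alpha_l]
   (all parts positive).  Rows are numbered 1..l from top to bottom, columns
   from 0.  Row i occupies the columns ribbon_start alpha i .. ribbon_start alpha i + alpha_i - 1,
   where the bottom row l starts in column 0 and the leftmost box of row r
   sits directly above the rightmost box of row r+1. *)

definition ribbon_start :: "nat list \<Rightarrow> nat \<Rightarrow> nat" where
  "ribbon_start alpha i = (\<Sum>k\<in>{i+1..length alpha}. alpha ! (k-1) - 1)"

definition ribbon_boxes :: "nat list \<Rightarrow> (nat \<times> nat) set" where
  "ribbon_boxes alpha = {(i,j). 1 \<le> i \<and> i \<le> length alpha \<and>
      ribbon_start alpha i \<le> j \<and> j < ribbon_start alpha i + alpha ! (i-1)}"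

(* c(D): boxes (i,j) with (i-1,j) in D and (i+1,j) not in D (row 0 is empty) *)
definition ribbon_corners :: "nat list \<Rightarrow> nat" where
  "ribbon_corners alpha = card {(i,j). (i,j) \<in> ribbon_boxes alpha \<and>
      (i-1,j) \<in> ribbon_boxes alpha \<and> (i+1,j) \<notin> ribbon_boxes alpha}"

(* Letters 1' < 1 < 2' < 2 < ... are encoded as positive naturals:
   k' = 2k-1 (marked, odd), k = 2k (unmarked, even). *)
definition is_filling :: "nat list \<Rightarrow> (nat \<times> nat \<Rightarrow> nat) \<Rightarrow> bool" where
  "is_filling alpha T \<longleftrightarrow>
     (\<forall>b. b \<notin> ribbon_boxes alpha \<longrightarrow> T b = 0) \<and>
     (\<forall>b\<in>ribbon_boxes alpha. 1 \<le> T b) \<and>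
     (\<forall>i j j'. (i,j) \<in> ribbon_boxes alpha \<and> (i,j') \<in> ribbon_boxes alpha \<and> j < j'
         \<longrightarrow> T (i,j) \<le> T (i,j')) \<and>
     (\<forall>i i' j. (i,j) \<in> ribbon_boxes alpha \<and> (i',j) \<in> ribbon_boxes alpha \<and> i < i'
         \<longrightarrow> T (i,j) \<le> T (i',j)) \<and>
     (\<forall>i i' j. (i,j) \<in> ribbon_boxes alpha \<and> (i',j) \<in> ribbon_boxes alpha \<and> i \<noteq> i'
         \<and> T (i,j) = T (i',j) \<longrightarrow> odd (T (i,j))) \<and>
     (\<forall>i j j'. (i,j) \<in> ribbon_boxes alpha \<and> (i,j') \<in> ribbon_boxes alpha \<and> j \<noteq> j'
         \<and> T (i,j) = T (i,j') \<longrightarrow> even (T (i,j)))"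

(* c(T)_k: number of entries k or k' *)
definition filling_content :: "nat list \<Rightarrow> (nat \<times> nat \<Rightarrow> nat) \<Rightarrow> nat \<Rightarrow> nat" where
  "filling_content alpha T k = card {b \<in> ribbon_boxes alpha. (T b + 1) div 2 = k}"

(* coefficient of the monomial x^a (a : variable index \<Rightarrow> exponent, variables x_1,x_2,...)
   in r_D *)
definition ribbon_coeff :: "nat list \<Rightarrow> (nat \<Rightarrow> nat) \<Rightarrow> nat" where
  "ribbon_coeff alpha a = card {T. is_filling alpha T \<and> (\<forall>k. filling_content alpha T k = a k)}"

definition odd_partitions :: "nat \<Rightarrow> nat list set" where
  "odd_partitions n = {lam. sorted_wrt (\<ge>) lam \<and> (\<forall>p\<in>set lam. odd p) \<and> sum_list lam = n}"

(* coefficient of x^a in p_lam = prod_i (sum_{v\<ge>1} x_v^(lam_i)) : number of choices of a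
   variable v_i \<ge> 1 for each part such that the resulting monomial is x^a *)
definition power_sum_coeff :: "nat list \<Rightarrow> (nat \<Rightarrow> nat) \<Rightarrow> nat" where
  "power_sum_coeff lam a = card {vs. length vs = length lam \<and> (\<forall>v\<in>set vs. 1 \<le> v) \<and>
      (\<forall>j. a j = (\<Sum>i\<in>{i. i < length lam \<and> vs ! i = j}. lam ! i))}"

definition is_p_expansion :: "nat list \<Rightarrow> (nat list \<Rightarrow> real) \<Rightarrow> bool" where
  "is_p_expansion alpha c \<longleftrightarrow>
     (\<forall>a :: nat \<Rightarrow> nat. finite {k. a k \<noteq> 0} \<longrightarrow>
        real (ribbon_coeff alpha a) =
          (\<Sum>lam\<in>odd_partitions (sum_list alpha). c lam * real (power_sum_coeff lam a)))"

end

theory Submission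
  imports Defs
begin

lemma rs_Cons_Suc: "ribbon_start (x#rest) (Suc i) = ribbon_start rest i"
proof -
  have "ribbon_start (x#rest) (Suc i) = (\<Sum>k\<in>{Suc i+1..Suc (length rest)}. (x#rest) ! (k-1) - 1)"
    by (simp add: ribbon_start_def)
  also have "\<dots> = (\<Sum>k\<in>{i+1..length rest}. (x#rest) ! (Suc k-1) - 1)"
    by (simp only: add_Suc sum.shift_bounds_cl_Suc_ivl)
  also have "\<dots> = (\<Sum>k\<in>{i+1..length rest}. rest ! (k-1) - 1)"
    by (rule sum.cong) (auto simp: nth_Cons')
  finally show ?thesis by (simp add: ribbon_start_def)
qed

lemma rs_Cons_0: "ribbon_start (x#rest) 0 = (x - 1) + ribbon_start rest 0"
proof -
  have "{1..Suc (length rest)} = insert 1 {Suc 1..Suc (length rest)}" by auto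
  hence "ribbon_start (x#rest) 0 = (x - 1) + (\<Sum>k\<in>{Suc 1..Suc (length rest)}. (x#rest) ! (k-1) - 1)"
    by (simp add: ribbon_start_def)
  also have "(\<Sum>k\<in>{Suc 1..Suc (length rest)}. (x#rest) ! (k-1) - 1) = ribbon_start (x#rest) (Suc 0)"
    by (simp add: ribbon_start_def)
  finally show ?thesis by (simp add: rs_Cons_Suc)
qed

lemma boxes_Nil: "ribbon_boxes [] = {}"
  by (auto simp: ribbon_boxes_def)

lemma boxes_Cons: "ribbon_boxes (x#rest) =
   {(1,j) | j. ribbon_start rest 0 \<le> j \<and> j < ribbon_start rest 0 + x}
   \<union> (\<lambda>(i,j). (Suc i, j)) ` ribbon_boxes rest"
proof (intro set_eqI iffI)
  fix b assume b: "b \<in> ribbon_boxes (x#rest)"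
  obtain i j where bij: "b = (i,j)" by force
  from b bij have i: "1 \<le> i" "i \<le> Suc (length rest)"
    and j: "ribbon_start (x#rest) i \<le> j" "j < ribbon_start (x#rest) i + (x#rest) ! (i-1)"
    by (auto simp: ribbon_boxes_def)
  show "b \<in> {(1,j) | j. ribbon_start rest 0 \<le> j \<and> j < ribbon_start rest 0 + x}
   \<union> (\<lambda>(i,j). (Suc i, j)) ` ribbon_boxes rest"
  proof (cases i)
    case 0 then show ?thesis using i by simp
  next
    case (Suc i')
    show ?thesis
    proof (cases i')
      case 0 then show ?thesis using j Suc bij by (simp add: rs_Cons_Suc)
    next
      case (Suc i'')
      have "(i',j) \<in> ribbon_boxes rest" using i j \<open>i = Suc i'\<close> Suc
        by (auto simp: ribbon_boxes_def rs_Cons_Suc)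
      then show ?thesis using bij \<open>i = Suc i'\<close> by force
    qed
  qed
next
  fix b assume "b \<in> {(1,j) | j. ribbon_start rest 0 \<le> j \<and> j < ribbon_start rest 0 + x}
   \<union> (\<lambda>(i,j). (Suc i, j)) ` ribbon_boxes rest"
  then show "b \<in> ribbon_boxes (x#rest)"
  proof
    assume "b \<in> {(1,j) | j. ribbon_start rest 0 \<le> j \<and> j < ribbon_start rest 0 + x}"
    then show ?thesis by (auto simp: ribbon_boxes_def rs_Cons_Suc[where i=0, simplified])
  next
    assume "b \<in> (\<lambda>(i,j). (Suc i, j)) ` ribbon_boxes rest"
    then obtain i j where b: "b = (Suc i, j)" and "(i,j) \<in> ribbon_boxes rest" by auto
    then show ?thesis
      by (cases i) (auto simp: ribbon_boxes_def rs_Cons_Suc)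
  qed
qed

definition hok :: "nat \<Rightarrow> nat \<Rightarrow> bool" where "hok a b \<longleftrightarrow> a < b \<or> (a = b \<and> even a)"
definition vok :: "nat \<Rightarrow> nat \<Rightarrow> bool" where "vok a b \<longleftrightarrow> b < a \<or> (b = a \<and> odd a)"

definition UT :: "(nat \<times> nat \<Rightarrow> nat) \<Rightarrow> nat \<times> nat \<Rightarrow> nat" where
  "UT T = (\<lambda>(i,j). if i = 0 then 0 else T (Suc i, j))"

lemma box_i: "(i,j) \<in> ribbon_boxes a \<Longrightarrow> 1 \<le> i"
  by (auto simp: ribbon_boxes_def)

lemma box_col_le: "\<forall>p\<in>set a. 0 < p \<Longrightarrow> (i,j) \<in> ribbon_boxes a \<Longrightarrow> j \<le> ribbon_start a 0"
proof (induction a arbitrary: i j)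
  case Nil then show ?case by (simp add: boxes_Nil)
next
  case (Cons x rest)
  from Cons.prems(2) show ?case unfolding boxes_Cons
  proof
    assume "(i, j) \<in> {(1, j) |j. ribbon_start rest 0 \<le> j \<and> j < ribbon_start rest 0 + x}"
    then show ?thesis using Cons.prems(1) by (auto simp: rs_Cons_0)
  next
    assume "(i, j) \<in> (\<lambda>(i, j). (Suc i, j)) ` ribbon_boxes rest"
    then obtain i' where "(i',j) \<in> ribbon_boxes rest" by auto
    then show ?thesis using Cons by (fastforce simp: rs_Cons_0)
  qed
qed

lemma top_right: "0 < y \<Longrightarrow> (1, ribbon_start (y#r) 0) \<in> ribbon_boxes (y#r)"
  by (auto simp: boxes_Cons rs_Cons_0)

lemma chain_mono:
  assumes h: "\<forall>j. a \<le> j \<and> Suc j < b \<longrightarrow> hok (f j) (f (Suc j))"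
  shows "a \<le> j \<Longrightarrow> j + Suc d < b \<Longrightarrow> f j \<le> f (j + Suc d) \<and> (f j = f (j + Suc d) \<longrightarrow> even (f j))"
proof (induction d)
  case 0 then show ?case using h by (auto simp: hok_def)
next
  case (Suc d)
  then have IH: "f j \<le> f (j + Suc d) \<and> (f j = f (j + Suc d) \<longrightarrow> even (f j))" by simp
  have "hok (f (j + Suc d)) (f (Suc (j + Suc d)))" using h Suc.prems by auto
  then show ?case using IH by (auto simp: hok_def)
qed

lemma chain_mono':
  assumes h: "\<forall>j. a \<le> j \<and> Suc j < b \<longrightarrow> hok (f j) (f (Suc j))"
    and "a \<le> j" "j < j'" "j' < b"
  shows "f j \<le> f j' \<and> (f j = f j' \<longrightarrow> even (f j))"
proof -
  obtain d where "j' = j + Suc d" using \<open>j < j'\<close> less_iff_Suc_add by auto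
  then show ?thesis using chain_mono[OF h] assms by auto
qed

lemma fill_Cons:
  fixes T :: "nat \<times> nat \<Rightarrow> nat"
  assumes x: "0 < x" and pos: "\<forall>p\<in>set rest. 0 < p"
  defines "s \<equiv> ribbon_start rest 0"
  shows "is_filling (x#rest) T \<longleftrightarrow>
    (\<forall>j. T (0,j) = 0) \<and> (\<forall>j. (j < s \<or> s + x \<le> j) \<longrightarrow> T (1,j) = 0) \<and>
    is_filling rest (UT T) \<and>
    (\<forall>j. s \<le> j \<and> j < s + x \<longrightarrow> 1 \<le> T (1,j)) \<and>
    (\<forall>j. s \<le> j \<and> Suc j < s + x \<longrightarrow> hok (T (1,j)) (T (1,Suc j))) \<and>
    (rest \<noteq> [] \<longrightarrow> vok (T (2,s)) (T (1,s)))"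
  (is "?L \<longleftrightarrow> ?R")
proof
  have B: "ribbon_boxes (x#rest) = {(1,j) | j. s \<le> j \<and> j < s + x} \<union> (\<lambda>(i,j). (Suc i, j)) ` ribbon_boxes rest"
    by (simp add: boxes_Cons s_def)
  have shB: "(Suc i, j) \<in> ribbon_boxes (x#rest) \<longleftrightarrow> (i = 0 \<and> s \<le> j \<and> j < s + x) \<or> (i,j) \<in> ribbon_boxes rest" for i j
    unfolding B by auto
  have zB: "(0, j) \<notin> ribbon_boxes (x#rest)" for j using box_i by fastforce
  have zB': "(0, j) \<notin> ribbon_boxes rest" for j using box_i by fastforce
  have colle: "(i,j) \<in> ribbon_boxes rest \<Longrightarrow> j \<le> s" for i j using box_col_le[OF pos] s_def by blast
  {
    assume L: ?L
    have F0: "\<forall>b. b \<notin> ribbon_boxes (x#rest) \<longrightarrow> T b = 0"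
      and F1: "\<forall>b\<in>ribbon_boxes (x#rest). 1 \<le> T b"
      and F2: "\<forall>i j j'. (i,j) \<in> ribbon_boxes (x#rest) \<and> (i,j') \<in> ribbon_boxes (x#rest) \<and> j < j' \<longrightarrow> T (i,j) \<le> T (i,j')"
      and F3: "\<forall>i i' j. (i,j) \<in> ribbon_boxes (x#rest) \<and> (i',j) \<in> ribbon_boxes (x#rest) \<and> i < i' \<longrightarrow> T (i,j) \<le> T (i',j)"
      and F4: "\<forall>i i' j. (i,j) \<in> ribbon_boxes (x#rest) \<and> (i',j) \<in> ribbon_boxes (x#rest) \<and> i \<noteq> i' \<and> T (i,j) = T (i',j) \<longrightarrow> odd (T (i,j))"
      and F5: "\<forall>i j j'. (i,j) \<in> ribbon_boxes (x#rest) \<and> (i,j') \<in> ribbon_boxes (x#rest) \<and> j \<noteq> j' \<and> T (i,j) = T (i,j') \<longrightarrow> even (T (i,j))"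
      using L unfolding is_filling_def by blast+
    have z0: "\<forall>j. T (0,j) = 0" using F0 zB by blast
    have z1: "\<forall>j. (j < s \<or> s + x \<le> j) \<longrightarrow> T (1,j) = 0"
    proof (intro allI impI)
      fix j assume "j < s \<or> s + x \<le> j"
      then have "(Suc 0, j) \<notin> ribbon_boxes (x#rest)" using shB[of 0 j] zB' by auto
      then show "T (1,j) = 0" using F0 by simp
    qed
    have U: "is_filling rest (UT T)"
      unfolding is_filling_def
    proof (intro conjI)
      show "\<forall>b. b \<notin> ribbon_boxes rest \<longrightarrow> UT T b = 0"
      proof (intro allI impI)
        fix b assume "b \<notin> ribbon_boxes rest"
        obtain i j where b: "b = (i,j)" by force
        show "UT T b = 0"
        proof (cases "i = 0")
          case True then show ?thesis by (simp add: UT_def b)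
        next
          case False
          then have "(Suc i, j) \<notin> ribbon_boxes (x#rest)" using shB \<open>b \<notin> _\<close> b by auto
          then show ?thesis using F0 False by (simp add: UT_def b)
        qed
      qed
      show "\<forall>b\<in>ribbon_boxes rest. 1 \<le> UT T b"
      proof
        fix b assume b: "b \<in> ribbon_boxes rest"
        obtain i j where ij: "b = (i,j)" by force
        have "i \<noteq> 0" using box_i b ij by fastforce
        moreover have "(Suc i, j) \<in> ribbon_boxes (x#rest)" using shB b ij by auto
        ultimately show "1 \<le> UT T b" using F1 ij by (simp add: UT_def)
      qed
      show "\<forall>i j j'. (i, j) \<in> ribbon_boxes rest \<and> (i, j') \<in> ribbon_boxes rest \<and> j < j' \<longrightarrow> UT T (i, j) \<le> UT T (i, j')"
      proof (intro allI impI)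
        fix i j j' assume a: "(i, j) \<in> ribbon_boxes rest \<and> (i, j') \<in> ribbon_boxes rest \<and> j < j'"
        then have "T (Suc i, j) \<le> T (Suc i, j')" using F2 shB by blast
        then show "UT T (i, j) \<le> UT T (i, j')" using a box_i by (fastforce simp: UT_def)
      qed
      show "\<forall>i i' j. (i, j) \<in> ribbon_boxes rest \<and> (i', j) \<in> ribbon_boxes rest \<and> i < i' \<longrightarrow> UT T (i, j) \<le> UT T (i', j)"
      proof (intro allI impI)
        fix i i' j assume a: "(i, j) \<in> ribbon_boxes rest \<and> (i', j) \<in> ribbon_boxes rest \<and> i < i'"
        then have "T (Suc i, j) \<le> T (Suc i', j)" using F3 shB by blast
        then show "UT T (i, j) \<le> UT T (i', j)" using a box_i by (fastforce simp: UT_def)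
      qed
      show "\<forall>i i' j. (i, j) \<in> ribbon_boxes rest \<and> (i', j) \<in> ribbon_boxes rest \<and> i \<noteq> i' \<and> UT T (i, j) = UT T (i', j) \<longrightarrow> odd (UT T (i, j))"
      proof (intro allI impI)
        fix i i' j assume a: "(i, j) \<in> ribbon_boxes rest \<and> (i', j) \<in> ribbon_boxes rest \<and> i \<noteq> i' \<and> UT T (i, j) = UT T (i', j)"
        then have i0: "i \<noteq> 0" "i' \<noteq> 0" using box_i by fastforce+
        then have "T (Suc i, j) = T (Suc i', j)" using a by (simp add: UT_def)
        then have "odd (T (Suc i, j))" using F4 shB a by blast
        then show "odd (UT T (i, j))" using i0 by (simp add: UT_def)
      qed
      show "\<forall>i j j'. (i, j) \<in> ribbon_boxes rest \<and> (i, j') \<in> ribbon_boxes rest \<and> j \<noteq> j' \<and> UT T (i, j) = UT T (i, j') \<longrightarrow> even (UT T (i, j))"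
      proof (intro allI impI)
        fix i j j' assume a: "(i, j) \<in> ribbon_boxes rest \<and> (i, j') \<in> ribbon_boxes rest \<and> j \<noteq> j' \<and> UT T (i, j) = UT T (i, j')"
        then have i0: "i \<noteq> 0" using box_i by fastforce
        then have "T (Suc i, j) = T (Suc i, j')" using a by (simp add: UT_def)
        then have "even (T (Suc i, j))" using F5 shB a by blast
        then show "even (UT T (i, j))" using i0 by (simp add: UT_def)
      qed
    qed
    have p1: "\<forall>j. s \<le> j \<and> j < s + x \<longrightarrow> 1 \<le> T (1,j)"
      using F1 shB[of 0] by auto
    have p2: "\<forall>j. s \<le> j \<and> Suc j < s + x \<longrightarrow> hok (T (1,j)) (T (1,Suc j))"
    proof (intro allI impI)
      fix j assume a: "s \<le> j \<and> Suc j < s + x"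
      have m: "(1,j) \<in> ribbon_boxes (x#rest)" "(1,Suc j) \<in> ribbon_boxes (x#rest)"
        using a shB[of 0] by auto
      then have "T (1,j) \<le> T (1,Suc j)" using F2 by blast
      moreover have "T (1,j) = T (1,Suc j) \<longrightarrow> even (T (1,j))" using F5[rule_format, of 1 j "Suc j"] m by simp
      ultimately show "hok (T (1,j)) (T (1,Suc j))" by (auto simp: hok_def)
    qed
    have p3: "rest \<noteq> [] \<longrightarrow> vok (T (2,s)) (T (1,s))"
    proof
      assume "rest \<noteq> []"
      then obtain y r where r: "rest = y # r" by (cases rest) auto
      then have "(1, s) \<in> ribbon_boxes rest" using top_right pos s_def by auto
      then have m: "(2,s) \<in> ribbon_boxes (x#rest)" "(1,s) \<in> ribbon_boxes (x#rest)"
        using shB[of 1 s] shB[of 0 s] x by (auto simp: numeral_2_eq_2)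
      then have "T (1,s) \<le> T (2,s)" using F3[rule_format, of 1 s 2] by simp
      moreover have "T (1,s) = T (2,s) \<longrightarrow> odd (T (1,s))" using F4[rule_format, of 1 s 2] m by simp
      ultimately show "vok (T (2,s)) (T (1,s))" by (auto simp: vok_def)
    qed
    show ?R using z0 z1 U p1 p2 p3 by blast
  }
  {
    assume R: ?R
    then have z0: "\<forall>j. T (0,j) = 0" and z1: "\<forall>j. (j < s \<or> s + x \<le> j) \<longrightarrow> T (1,j) = 0"
      and U: "is_filling rest (UT T)" and p1: "\<forall>j. s \<le> j \<and> j < s + x \<longrightarrow> 1 \<le> T (1,j)"
      and p2: "\<forall>j. s \<le> j \<and> Suc j < s + x \<longrightarrow> hok (T (1,j)) (T (1,Suc j))"
      and p3: "rest \<noteq> [] \<longrightarrow> vok (T (2,s)) (T (1,s))" by blast+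
    have G0: "\<forall>b. b \<notin> ribbon_boxes rest \<longrightarrow> UT T b = 0"
      and G1: "\<forall>b\<in>ribbon_boxes rest. 1 \<le> UT T b"
      and G2: "\<forall>i j j'. (i,j) \<in> ribbon_boxes rest \<and> (i,j') \<in> ribbon_boxes rest \<and> j < j' \<longrightarrow> UT T (i,j) \<le> UT T (i,j')"
      and G3: "\<forall>i i' j. (i,j) \<in> ribbon_boxes rest \<and> (i',j) \<in> ribbon_boxes rest \<and> i < i' \<longrightarrow> UT T (i,j) \<le> UT T (i',j)"
      and G4: "\<forall>i i' j. (i,j) \<in> ribbon_boxes rest \<and> (i',j) \<in> ribbon_boxes rest \<and> i \<noteq> i' \<and> UT T (i,j) = UT T (i',j) \<longrightarrow> odd (UT T (i,j))"
      and G5: "\<forall>i j j'. (i,j) \<in> ribbon_boxes rest \<and> (i,j') \<in> ribbon_boxes rest \<and> j \<noteq> j' \<and> UT T (i,j) = UT T (i,j') \<longrightarrow> even (UT T (i,j))"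
      using U unfolding is_filling_def by blast+
    have Ts: "T (Suc i, j) = UT T (i,j)" if "i \<noteq> 0" for i j using that by (simp add: UT_def)
    have cm: "s \<le> j \<Longrightarrow> j < j' \<Longrightarrow> j' < s + x \<Longrightarrow> T (1,j) \<le> T (1,j') \<and> (T (1,j) = T (1,j') \<longrightarrow> even (T (1,j)))" for j j'
      using chain_mono'[OF p2] by blast
    have mem: "(i,j) \<in> ribbon_boxes (x#rest) \<longleftrightarrow> (i = 1 \<and> s \<le> j \<and> j < s + x) \<or> (\<exists>k. i = Suc k \<and> k \<noteq> 0 \<and> (k,j) \<in> ribbon_boxes rest)" for i j
    proof (cases i)
      case 0 then show ?thesis using zB by simp
    next
      case (Suc k) then show ?thesis using shB[of k j] zB'[of j] by (cases k) auto
    qed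
    have col: "T (1,j) \<le> T (i',j) \<and> (T (1,j) = T (i',j) \<longrightarrow> odd (T (1,j)))"
      if a: "s \<le> j" "j < s + x" "(k,j) \<in> ribbon_boxes rest" "i' = Suc k" for j k i'
    proof -
      have js: "j = s" using colle[OF a(3)] a(1) by simp
      have k1: "1 \<le> k" using box_i a(3) by blast
      have ne: "rest \<noteq> []" using a(3) boxes_Nil by auto
      then have v: "vok (T (2,s)) (T (1,s))" using p3 by blast
      obtain y r where r: "rest = y # r" using ne by (cases rest) auto
      then have top: "(1, s) \<in> ribbon_boxes rest" using top_right pos s_def by auto
      have "T (2,s) \<le> T (i',s) \<and> (T (2,s) = T (i',s) \<longrightarrow> True)"
      proof (cases "k = 1")
        case True then show ?thesis using a by (simp add: numeral_2_eq_2)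
      next
        case False
        then have "UT T (1,s) \<le> UT T (k,s)" using G3[rule_format, of 1 s k] top a(3) js k1 by simp
        then show ?thesis using a k1 by (simp add: UT_def numeral_2_eq_2)
      qed
      then show ?thesis using v js by (auto simp: vok_def)
    qed
    show ?L unfolding is_filling_def
    proof (intro conjI)
      show "\<forall>b. b \<notin> ribbon_boxes (x # rest) \<longrightarrow> T b = 0"
      proof (intro allI impI)
        fix b assume nb: "b \<notin> ribbon_boxes (x # rest)"
        obtain i j where b: "b = (i,j)" by force
        show "T b = 0"
        proof (cases i)
          case 0 then show ?thesis using z0 b by simp
        next
          case (Suc k)
          show ?thesis
          proof (cases k)
            case 0 then show ?thesis using z1 nb b Suc mem by auto
          next
            case (Suc k')
            then have "(k,j) \<notin> ribbon_boxes rest" using nb b \<open>i = Suc k\<close> mem by auto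
            then have "UT T (k,j) = 0" using G0 by blast
            then show ?thesis using b \<open>i = Suc k\<close> Suc Ts by simp
          qed
        qed
      qed
      show "\<forall>b\<in>ribbon_boxes (x # rest). 1 \<le> T b"
      proof
        fix b assume "b \<in> ribbon_boxes (x # rest)"
        obtain i j where b: "b = (i,j)" by force
        with \<open>b \<in> ribbon_boxes (x # rest)\<close> have "(i,j) \<in> ribbon_boxes (x # rest)" by simp
        then show "1 \<le> T b" using b mem[of i j] p1 G1 Ts by auto
      qed
      show "\<forall>i j j'. (i, j) \<in> ribbon_boxes (x # rest) \<and> (i, j') \<in> ribbon_boxes (x # rest) \<and> j < j' \<longrightarrow> T (i, j) \<le> T (i, j')"
      proof (intro allI impI)
        fix i j j' assume a: "(i, j) \<in> ribbon_boxes (x # rest) \<and> (i, j') \<in> ribbon_boxes (x # rest) \<and> j < j'"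
        then have "(i = 1 \<and> s \<le> j \<and> j' < s + x) \<or> (\<exists>k. i = Suc k \<and> k \<noteq> 0 \<and> (k,j) \<in> ribbon_boxes rest \<and> (k,j') \<in> ribbon_boxes rest)"
          using mem by auto
        then show "T (i, j) \<le> T (i, j')"
        proof
          assume "i = 1 \<and> s \<le> j \<and> j' < s + x" then show ?thesis using cm a by blast
        next
          assume "\<exists>k. i = Suc k \<and> k \<noteq> 0 \<and> (k,j) \<in> ribbon_boxes rest \<and> (k,j') \<in> ribbon_boxes rest"
          then show ?thesis using G2 Ts a by auto
        qed
      qed
      show "\<forall>i j j'. (i, j) \<in> ribbon_boxes (x # rest) \<and> (i, j') \<in> ribbon_boxes (x # rest) \<and> j \<noteq> j' \<and> T (i, j) = T (i, j') \<longrightarrow> even (T (i, j))"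
      proof (intro allI impI)
        fix i j j' assume a: "(i, j) \<in> ribbon_boxes (x # rest) \<and> (i, j') \<in> ribbon_boxes (x # rest) \<and> j \<noteq> j' \<and> T (i, j) = T (i, j')"
        then have "(i = 1 \<and> s \<le> j \<and> j < s + x \<and> s \<le> j' \<and> j' < s + x) \<or> (\<exists>k. i = Suc k \<and> k \<noteq> 0 \<and> (k,j) \<in> ribbon_boxes rest \<and> (k,j') \<in> ribbon_boxes rest)"
          using mem by auto
        then show "even (T (i, j))"
        proof
          assume h: "i = 1 \<and> s \<le> j \<and> j < s + x \<and> s \<le> j' \<and> j' < s + x"
          show ?thesis
          proof (cases "j < j'")
            case True then show ?thesis using cm[of j j'] h a by auto
          next
            case False then have "j' < j" using a by auto
            then show ?thesis using cm[of j' j] h a by auto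
          qed
        next
          assume "\<exists>k. i = Suc k \<and> k \<noteq> 0 \<and> (k,j) \<in> ribbon_boxes rest \<and> (k,j') \<in> ribbon_boxes rest"
          then obtain k where k: "i = Suc k" "k \<noteq> 0" "(k,j) \<in> ribbon_boxes rest" "(k,j') \<in> ribbon_boxes rest" by blast
          then have "UT T (k,j) = UT T (k,j')" using a Ts by simp
          then have "even (UT T (k,j))" using G5 k a by blast
          then show ?thesis using Ts k by simp
        qed
      qed
      show "\<forall>i i' j. (i, j) \<in> ribbon_boxes (x # rest) \<and> (i', j) \<in> ribbon_boxes (x # rest) \<and> i < i' \<longrightarrow> T (i, j) \<le> T (i', j)"
      proof (intro allI impI)
        fix i i' j assume a: "(i, j) \<in> ribbon_boxes (x # rest) \<and> (i', j) \<in> ribbon_boxes (x # rest) \<and> i < i'"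
        have i1: "1 \<le> i" using a box_i by blast
        have "\<exists>k. i' = Suc k \<and> k \<noteq> 0 \<and> (k,j) \<in> ribbon_boxes rest" using mem[of i' j] a i1 by auto
        then obtain k' where k': "i' = Suc k'" "k' \<noteq> 0" "(k',j) \<in> ribbon_boxes rest" by blast
        have "(i = 1 \<and> s \<le> j \<and> j < s + x) \<or> (\<exists>k. i = Suc k \<and> k \<noteq> 0 \<and> (k,j) \<in> ribbon_boxes rest)" using a mem[of i j] by blast
        then show "T (i, j) \<le> T (i', j)"
        proof
          assume h: "i = 1 \<and> s \<le> j \<and> j < s + x"
          then show ?thesis using col[of j k' i'] k' by simp
        next
          assume "\<exists>k. i = Suc k \<and> k \<noteq> 0 \<and> (k,j) \<in> ribbon_boxes rest"
          then obtain k where k: "i = Suc k" "k \<noteq> 0" "(k,j) \<in> ribbon_boxes rest" by blast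
          then have "UT T (k,j) \<le> UT T (k',j)" using G3[rule_format, of k j k'] k' a by simp
          then show ?thesis using Ts k k' by simp
        qed
      qed
      show "\<forall>i i' j. (i, j) \<in> ribbon_boxes (x # rest) \<and> (i', j) \<in> ribbon_boxes (x # rest) \<and> i \<noteq> i' \<and> T (i, j) = T (i', j) \<longrightarrow> odd (T (i, j))"
      proof (intro allI impI)
        fix i i' j assume a: "(i, j) \<in> ribbon_boxes (x # rest) \<and> (i', j) \<in> ribbon_boxes (x # rest) \<and> i \<noteq> i' \<and> T (i, j) = T (i', j)"
        have gen: "odd (T (i1,j))" if "(i1, j) \<in> ribbon_boxes (x # rest)" "(i2, j) \<in> ribbon_boxes (x # rest)" "i1 < i2" "T (i1,j) = T (i2,j)" for i1 i2
        proof -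
          have i1: "1 \<le> i1" using that(1) box_i by blast
          have "\<exists>k. i2 = Suc k \<and> k \<noteq> 0 \<and> (k,j) \<in> ribbon_boxes rest" using mem[of i2 j] that i1 by auto
          then obtain k' where k': "i2 = Suc k'" "k' \<noteq> 0" "(k',j) \<in> ribbon_boxes rest" by blast
          have "(i1 = 1 \<and> s \<le> j \<and> j < s + x) \<or> (\<exists>k. i1 = Suc k \<and> k \<noteq> 0 \<and> (k,j) \<in> ribbon_boxes rest)" using that(1) mem[of i1 j] by blast
          then show ?thesis
          proof
            assume h: "i1 = 1 \<and> s \<le> j \<and> j < s + x"
            then show ?thesis using col[of j k' i2] k' that by simp
          next
            assume "\<exists>k. i1 = Suc k \<and> k \<noteq> 0 \<and> (k,j) \<in> ribbon_boxes rest"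
            then obtain k where k: "i1 = Suc k" "k \<noteq> 0" "(k,j) \<in> ribbon_boxes rest" by blast
            then have "UT T (k,j) = UT T (k',j)" using that k' Ts by simp
            then have "odd (UT T (k,j))" using G4[rule_format, of k j k'] k k' that by simp
            then show ?thesis using Ts k by simp
          qed
        qed
        show "odd (T (i, j))"
        proof (cases "i < i'")
          case True then show ?thesis using gen[of i i'] a by blast
        next
          case False then have "i' < i" using a by auto
          then show ?thesis using gen[of i' i] a by simp
        qed
      qed
    qed
  }
qed

fun bl :: "nat list \<Rightarrow> (nat \<times> nat) list" where
  "bl [] = []"
| "bl (x#rest) = map (\<lambda>(i,j). (Suc i, j)) (bl rest) @ map (\<lambda>j. (1,j)) [ribbon_start rest 0..<ribbon_start rest 0 + x]"

lemma set_bl: "set (bl a) = ribbon_boxes a"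
  by (induction a) (auto simp: boxes_Nil boxes_Cons)

lemma length_bl: "length (bl a) = sum_list a"
  by (induction a) auto

lemma distinct_bl: "distinct (bl a)"
proof (induction a)
  case Nil then show ?case by simp
next
  case (Cons x rest)
  have "inj_on (\<lambda>(i,j). (Suc i, j)) (set (bl rest))" by (auto simp: inj_on_def)
  moreover have "(1,j) \<notin> (\<lambda>(i,j). (Suc i, j)) ` set (bl rest)" for j
    using box_i[of 0 j rest] by (auto simp: set_bl)
  moreover have "(0,j) \<notin> set (bl rest)" for j using box_i[of 0 j rest] by (auto simp: set_bl)
  ultimately show ?case using Cons by (auto simp: distinct_map inj_on_def)
qed

lemma last_bl: "0 < x \<Longrightarrow> last (bl (x#rest)) = (1, ribbon_start (x#rest) 0)"
  by (cases x) (auto simp: rs_Cons_0 last_map)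

definition chainH :: "nat list \<Rightarrow> bool" where
  "chainH r \<longleftrightarrow> (\<forall>i. Suc i < length r \<longrightarrow> hok (r!i) (r!Suc i))"

fun wv :: "nat list \<Rightarrow> nat list \<Rightarrow> bool" where
  "wv [] w \<longleftrightarrow> w = []"
| "wv (x#rest) w \<longleftrightarrow> (\<exists>u r. w = u @ r \<and> wv rest u \<and> length r = x \<and> chainH r \<and> (\<forall>v\<in>set r. 1 \<le> v)
      \<and> (u \<noteq> [] \<longrightarrow> r \<noteq> [] \<longrightarrow> vok (last u) (hd r)))"

lemma map_T_bl:
  "map T (bl (x#rest)) = map (UT T) (bl rest) @ map (\<lambda>j. T (1,j)) [ribbon_start rest 0..<ribbon_start rest 0 + x]"
proof -
  have "map (T \<circ> (\<lambda>(i,j). (Suc i, j))) (bl rest) = map (UT T) (bl rest)"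
  proof (rule map_cong[OF refl])
    fix b assume "b \<in> set (bl rest)"
    then obtain i j where b: "b = (i,j)" "(i,j) \<in> ribbon_boxes rest" by (metis set_bl surj_pair)
    then have "i \<noteq> 0" using box_i by fastforce
    then show "(T \<circ> (\<lambda>(i,j). (Suc i, j))) b = UT T b" using b by (simp add: UT_def)
  qed
  then show ?thesis by simp
qed

lemma fill_to_word: "\<forall>p\<in>set a. 0 < p \<Longrightarrow> is_filling a T \<Longrightarrow> wv a (map T (bl a))"
proof (induction a arbitrary: T)
  case Nil then show ?case by simp
next
  case (Cons x rest)
  define s where "s = ribbon_start rest 0"
  have x: "0 < x" and pos: "\<forall>p\<in>set rest. 0 < p" using Cons.prems by auto
  note D = fill_Cons[OF x pos, of T, folded s_def]
  have U: "is_filling rest (UT T)" and p1: "\<forall>j. s \<le> j \<and> j < s + x \<longrightarrow> 1 \<le> T (1,j)"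
    and p2: "\<forall>j. s \<le> j \<and> Suc j < s + x \<longrightarrow> hok (T (1,j)) (T (1,Suc j))"
    and p3: "rest \<noteq> [] \<longrightarrow> vok (T (2,s)) (T (1,s))" using D Cons.prems(2) by blast+
  define u where "u = map (UT T) (bl rest)"
  define r where "r = map (\<lambda>j. T (1,j)) [s..<s + x]"
  have wu: "wv rest u" using Cons.IH[OF pos U] u_def by simp
  have lr: "length r = x" by (simp add: r_def)
  have rn: "r ! i = T (1, s + i)" if "i < x" for i using that by (simp add: r_def)
  have ch: "chainH r" unfolding chainH_def
  proof (intro allI impI)
    fix i assume "Suc i < length r"
    then have "Suc i < x" using lr by simp
    then show "hok (r ! i) (r ! Suc i)" using p2[rule_format, of "s+i"] rn by simp
  qed
  have pr: "\<forall>v\<in>set r. 1 \<le> v" using p1 by (auto simp: r_def)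
  have vk: "u \<noteq> [] \<longrightarrow> r \<noteq> [] \<longrightarrow> vok (last u) (hd r)"
  proof (intro impI)
    assume "u \<noteq> []" "r \<noteq> []"
    then have ne: "rest \<noteq> []" by (auto simp: u_def)
    then obtain y r' where rr: "rest = y # r'" by (cases rest) auto
    have y: "0 < y" using pos rr by simp
    have "last u = UT T (last (bl rest))" using \<open>u \<noteq> []\<close> by (simp add: u_def last_map)
    also have "\<dots> = T (2, s)" using last_bl[OF y, of r'] rr by (simp add: s_def UT_def numeral_2_eq_2)
    finally have "last u = T (2,s)" .
    moreover have "hd r = T (1,s)" using x by (simp add: r_def hd_map)
    ultimately show "vok (last u) (hd r)" using p3 ne by simp
  qed
  have "map T (bl (x#rest)) = u @ r" unfolding u_def r_def s_def by (rule map_T_bl)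
  then show ?case using wu lr ch pr vk by auto
qed

lemma fill_Nil: "is_filling [] (\<lambda>_. 0)"
  by (simp add: is_filling_def boxes_Nil)

lemma word_to_fill: "\<forall>p\<in>set a. 0 < p \<Longrightarrow> wv a w \<Longrightarrow> \<exists>T. is_filling a T \<and> map T (bl a) = w"
proof (induction a arbitrary: w)
  case Nil then show ?case using fill_Nil by auto
next
  case (Cons x rest)
  define s where "s = ribbon_start rest 0"
  have x: "0 < x" and pos: "\<forall>p\<in>set rest. 0 < p" using Cons.prems by auto
  from Cons.prems(2) obtain u r where w: "w = u @ r" and wu: "wv rest u" and lr: "length r = x"
    and ch: "chainH r" and pr: "\<forall>v\<in>set r. 1 \<le> v" and vk: "u \<noteq> [] \<longrightarrow> r \<noteq> [] \<longrightarrow> vok (last u) (hd r)"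
    by auto
  obtain T' where T': "is_filling rest T'" and mT': "map T' (bl rest) = u" using Cons.IH[OF pos wu] by blast
  define T where "T = (\<lambda>(i,j). if i = 0 then 0 else if i = 1 then (if s \<le> j \<and> j < s + x then r ! (j - s) else 0) else T' (i - 1, j))"
  have T'0: "T' (0,j) = 0" for j using T' box_i[of 0 j rest] unfolding is_filling_def by fastforce
  have UT: "UT T = T'"
  proof
    fix b show "UT T b = T' b" by (cases b) (auto simp: UT_def T_def T'0)
  qed
  have z0: "\<forall>j. T (0,j) = 0" by (simp add: T_def)
  have z1: "\<forall>j. (j < s \<or> s + x \<le> j) \<longrightarrow> T (1,j) = 0" by (auto simp: T_def)
  have p1: "\<forall>j. s \<le> j \<and> j < s + x \<longrightarrow> 1 \<le> T (1,j)"
  proof (intro allI impI)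
    fix j assume "s \<le> j \<and> j < s + x"
    then have "j - s < length r" using lr by arith
    then have "r ! (j - s) \<in> set r" by simp
    then show "1 \<le> T (1,j)" using pr \<open>s \<le> j \<and> j < s + x\<close> by (simp add: T_def)
  qed
  have p2: "\<forall>j. s \<le> j \<and> Suc j < s + x \<longrightarrow> hok (T (1,j)) (T (1,Suc j))"
  proof (intro allI impI)
    fix j assume a: "s \<le> j \<and> Suc j < s + x"
    then have "Suc (j - s) < length r" using lr by arith
    then have "hok (r ! (j - s)) (r ! Suc (j - s))" using ch by (simp add: chainH_def)
    moreover have "Suc j - s = Suc (j - s)" using a by (simp add: Suc_diff_le)
    ultimately show "hok (T (1,j)) (T (1,Suc j))" using a by (simp add: T_def)
  qed
  have p3: "rest \<noteq> [] \<longrightarrow> vok (T (2,s)) (T (1,s))"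
  proof
    assume ne: "rest \<noteq> []"
    then obtain y r' where rr: "rest = y # r'" by (cases rest) auto
    have y: "0 < y" using pos rr by simp
    have un: "u \<noteq> []" using mT' rr y by (cases y) auto
    have rn: "r \<noteq> []" using lr x by auto
    have "last u = T' (last (bl rest))" using un mT'[symmetric] by (simp add: last_map)
    also have "\<dots> = T' (1, s)" using last_bl[OF y, of r'] rr by (simp add: s_def)
    finally have "last u = T (2,s)" by (simp add: T_def)
    moreover have "hd r = T (1,s)" using rn x by (simp add: T_def hd_conv_nth)
    ultimately show "vok (T (2,s)) (T (1,s))" using vk un rn by simp
  qed
  have F: "is_filling (x#rest) T"
    using fill_Cons[OF x pos, of T, folded s_def] z0 z1 UT T' p1 p2 p3 by simp
  have "map (\<lambda>j. T (1,j)) [s..<s + x] = r"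
  proof (rule nth_equalityI)
    show "length (map (\<lambda>j. T (1,j)) [s..<s + x]) = length r" using lr by simp
    fix i assume "i < length (map (\<lambda>j. T (1,j)) [s..<s + x])"
    then have "i < x" by simp
    then show "map (\<lambda>j. T (1,j)) [s..<s + x] ! i = r ! i" by (simp add: T_def)
  qed
  then have "map T (bl (x#rest)) = w" using map_T_bl[of T x rest] UT mT' w by (simp add: s_def)
  then show ?case using F by blast
qed

lemma fill_zero: "is_filling a T \<Longrightarrow> b \<notin> ribbon_boxes a \<Longrightarrow> T b = 0"
  unfolding is_filling_def by blast

lemma inj_fill: "inj_on (\<lambda>T. map T (bl a)) {T. is_filling a T}"
proof (rule inj_onI)
  fix T1 T2 assume a: "T1 \<in> {T. is_filling a T}" "T2 \<in> {T. is_filling a T}" "map T1 (bl a) = map T2 (bl a)"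
  show "T1 = T2"
  proof
    fix b show "T1 b = T2 b"
    proof (cases "b \<in> ribbon_boxes a")
      case True then show ?thesis using a(3) by (simp add: map_eq_conv set_bl)
    next
      case False then show ?thesis using fill_zero[of a T1 b] fill_zero[of a T2 b] a(1,2) by simp
    qed
  qed
qed

lemma image_fill:
  assumes pos: "\<forall>p\<in>set a. 0 < p"
  shows "(\<lambda>T. map T (bl a)) ` {T. is_filling a T} = {w. wv a w}"
proof (rule equalityI)
  show "(\<lambda>T. map T (bl a)) ` {T. is_filling a T} \<subseteq> {w. wv a w}"
    using fill_to_word[OF pos] by blast
  show "{w. wv a w} \<subseteq> (\<lambda>T. map T (bl a)) ` {T. is_filling a T}"
  proof
    fix w assume "w \<in> {w. wv a w}"
    then obtain T where "is_filling a T" "map T (bl a) = w" using word_to_fill[OF pos] by blast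
    then show "w \<in> (\<lambda>T. map T (bl a)) ` {T. is_filling a T}" by blast
  qed
qed

definition wcont :: "nat list \<Rightarrow> nat \<Rightarrow> nat" where
  "wcont w k = length (filter (\<lambda>v. (v + 1) div 2 = k) w)"

lemma content_word: "filling_content a T k = wcont (map T (bl a)) k"
proof -
  have "filling_content a T k = card ({b. (T b + 1) div 2 = k} \<inter> set (bl a))"
    unfolding filling_content_def set_bl[symmetric] by (rule arg_cong[where f=card]) auto
  also have "\<dots> = length (filter (\<lambda>b. (T b + 1) div 2 = k) (bl a))"
    using distinct_length_filter[OF distinct_bl] by simp
  also have "\<dots> = wcont (map T (bl a)) k"
    by (simp add: wcont_def filter_map o_def)
  finally show ?thesis .
qed

lemma ribbon_coeff_words:
  assumes pos: "\<forall>p\<in>set a. 0 < p"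
  shows "ribbon_coeff a f = card {w. wv a w \<and> (\<forall>k. wcont w k = f k)}"
proof -
  let ?g = "\<lambda>T. map T (bl a)"
  let ?A = "{T. is_filling a T \<and> (\<forall>k. filling_content a T k = f k)}"
  have e1: "?A = {T \<in> {T. is_filling a T}. (\<forall>k. wcont (?g T) k = f k)}"
    by (simp add: content_word)
  have "?g ` ?A = {w \<in> ?g ` {T. is_filling a T}. \<forall>k. wcont w k = f k}"
    unfolding e1 by blast
  also have "\<dots> = {w. wv a w \<and> (\<forall>k. wcont w k = f k)}"
    unfolding image_fill[OF pos] by simp
  finally have im: "?g ` ?A = {w. wv a w \<and> (\<forall>k. wcont w k = f k)}" .
  have inj: "inj_on ?g ?A"
    using inj_fill by (rule inj_on_subset) blast
  have "ribbon_coeff a f = card ?A" unfolding ribbon_coeff_def by simp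
  also have "\<dots> = card (?g ` ?A)" using card_image[OF inj] by simp
  finally show ?thesis using im by simp
qed

lemma wv_length: "wv a w \<Longrightarrow> length w = sum_list a"
proof (induction a arbitrary: w)
  case Nil then show ?case by simp
next
  case (Cons x rest)
  then obtain u r where "w = u @ r" "wv rest u" "length r = x" by auto
  then show ?case using Cons.IH by auto
qed

lemma chainH_snoc: "r0 \<noteq> [] \<Longrightarrow> chainH (r0 @ [v]) \<longleftrightarrow> chainH r0 \<and> hok (last r0) v"
proof -
  assume ne: "r0 \<noteq> []"
  show ?thesis
  proof
    assume c: "chainH (r0 @ [v])"
    have "chainH r0" unfolding chainH_def
    proof (intro allI impI)
      fix i assume "Suc i < length r0"
      then have "Suc i < length (r0 @ [v])" by simp
      then have "hok ((r0 @ [v]) ! i) ((r0 @ [v]) ! Suc i)" using c unfolding chainH_def by blast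
      then show "hok (r0 ! i) (r0 ! Suc i)" using \<open>Suc i < length r0\<close> by (simp add: nth_append)
    qed
    moreover have "hok (last r0) v"
    proof -
      have "Suc (length r0 - 1) < length (r0 @ [v])" using ne by simp
      then have "hok ((r0 @ [v]) ! (length r0 - 1)) ((r0 @ [v]) ! Suc (length r0 - 1))"
        using c unfolding chainH_def by blast
      then show ?thesis using ne by (simp add: nth_append last_conv_nth)
    qed
    ultimately show "chainH r0 \<and> hok (last r0) v" by blast
  next
    assume c: "chainH r0 \<and> hok (last r0) v"
    show "chainH (r0 @ [v])" unfolding chainH_def
    proof (intro allI impI)
      fix i assume i: "Suc i < length (r0 @ [v])"
      show "hok ((r0 @ [v]) ! i) ((r0 @ [v]) ! Suc i)"
      proof (cases "Suc i < length r0")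
        case True then show ?thesis using c by (simp add: nth_append chainH_def)
      next
        case False
        then have "i = length r0 - 1" "i < length r0" using i by simp_all
        then show ?thesis using c ne by (simp add: nth_append last_conv_nth)
      qed
    qed
  qed
qed

lemma wv_H: "0 < x \<Longrightarrow> wv (Suc x # rest) w \<longleftrightarrow> (\<exists>w0 v. w = w0 @ [v] \<and> wv (x#rest) w0 \<and> 1 \<le> v \<and> hok (last w0) v)"
proof
  assume x: "0 < x" and h: "wv (Suc x # rest) w"
  from h obtain u r where w: "w = u @ r" and wu: "wv rest u" and lr: "length r = Suc x"
    and ch: "chainH r" and pr: "\<forall>v\<in>set r. 1 \<le> v" and vk: "u \<noteq> [] \<longrightarrow> r \<noteq> [] \<longrightarrow> vok (last u) (hd r)"
    by auto
  obtain r0 v where r: "r = r0 @ [v]" using lr by (metis length_Suc_conv_rev)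
  have r0ne: "r0 \<noteq> []" using lr r x by auto
  have ch0: "chainH r0" and hk: "hok (last r0) v" using chainH_snoc[OF r0ne] ch r by auto
  have "hd r = hd r0" using r r0ne by simp
  then have "wv (x#rest) (u @ r0)"
    using wu lr r ch0 pr vk r0ne by (intro wv.simps(2)[THEN iffD2] exI[of _ u] exI[of _ r0]) auto
  moreover have "last (u @ r0) = last r0" using r0ne by simp
  ultimately show "\<exists>w0 v. w = w0 @ [v] \<and> wv (x#rest) w0 \<and> 1 \<le> v \<and> hok (last w0) v"
    using w r hk pr by (intro exI[of _ "u @ r0"] exI[of _ v]) auto
next
  assume x: "0 < x" and "\<exists>w0 v. w = w0 @ [v] \<and> wv (x#rest) w0 \<and> 1 \<le> v \<and> hok (last w0) v"
  then obtain w0 v where w: "w = w0 @ [v]" and ww: "wv (x#rest) w0" and v: "1 \<le> v" and hk: "hok (last w0) v" by blast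
  from ww obtain u r0 where w0: "w0 = u @ r0" and wu: "wv rest u" and lr: "length r0 = x"
    and ch: "chainH r0" and pr: "\<forall>v\<in>set r0. 1 \<le> v" and vk: "u \<noteq> [] \<longrightarrow> r0 \<noteq> [] \<longrightarrow> vok (last u) (hd r0)"
    by auto
  have r0ne: "r0 \<noteq> []" using lr x by auto
  have "chainH (r0 @ [v])" using chainH_snoc[OF r0ne] ch hk w0 r0ne by simp
  moreover have "hd (r0 @ [v]) = hd r0" using r0ne by simp
  ultimately show "wv (Suc x # rest) w"
    using w w0 wu lr pr v vk r0ne by (intro wv.simps(2)[THEN iffD2] exI[of _ u] exI[of _ "r0 @ [v]"]) auto
qed

lemma wv_V: "a \<noteq> [] \<Longrightarrow> \<forall>p\<in>set a. 0 < p \<Longrightarrow> wv (1 # a) w \<longleftrightarrow> (\<exists>w0 v. w = w0 @ [v] \<and> wv a w0 \<and> 1 \<le> v \<and> vok (last w0) v)"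
proof
  assume ne: "a \<noteq> []" and pos: "\<forall>p\<in>set a. 0 < p" and h: "wv (1 # a) w"
  from h obtain u r where w: "w = u @ r" and wu: "wv a u" and lr: "length r = 1"
    and pr: "\<forall>v\<in>set r. 1 \<le> v" and vk: "u \<noteq> [] \<longrightarrow> r \<noteq> [] \<longrightarrow> vok (last u) (hd r)"
    by auto
  obtain v where r: "r = [v]" using lr by (metis One_nat_def length_0_conv length_Suc_conv)
  have "sum_list a > 0" using ne pos by (cases a) auto
  then have "length u > 0" using wv_length[OF wu] by simp
  then have "u \<noteq> []" by auto
  then show "\<exists>w0 v. w = w0 @ [v] \<and> wv a w0 \<and> 1 \<le> v \<and> vok (last w0) v"
    using w r wu pr vk by auto
next
  assume "\<exists>w0 v. w = w0 @ [v] \<and> wv a w0 \<and> 1 \<le> v \<and> vok (last w0) v"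
  then obtain w0 v where w: "w = w0 @ [v]" and ww: "wv a w0" and v: "1 \<le> v" and vk: "vok (last w0) v" by blast
  show "wv (1 # a) w"
    using w ww v vk by (intro wv.simps(2)[THEN iffD2] exI[of _ w0] exI[of _ "[v]"]) (auto simp: chainH_def)
qed

lemma wv_one: "wv [1] w \<longleftrightarrow> (\<exists>v. w = [v] \<and> 1 \<le> v)"
proof
  assume "wv [1] w"
  then obtain r where "w = r" "length r = 1" "\<forall>v\<in>set r. 1 \<le> v" by auto
  then show "\<exists>v. w = [v] \<and> 1 \<le> v" by (metis One_nat_def length_0_conv length_Suc_conv list.set_intros(1))
next
  assume "\<exists>v. w = [v] \<and> 1 \<le> v"
  then show "wv [1] w" by (auto simp: chainH_def intro!: exI[of _ "[]"])
qed

definition Wd :: "nat list \<Rightarrow> nat list set" where "Wd a = {w. wv a w \<and> (\<forall>v\<in>set w. v \<le> 4)}"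
definition mb :: "nat list \<Rightarrow> nat" where "mb w = length (filter (\<lambda>v. 3 \<le> v) w)"
definition st :: "nat list \<Rightarrow> (nat \<Rightarrow> real) \<Rightarrow> nat \<Rightarrow> real" where
  "st a g u = (\<Sum>w\<in>{w\<in>Wd a. last w = u}. g (mb w))"

lemma wv_letters: "wv a w \<Longrightarrow> \<forall>v\<in>set w. 1 \<le> v"
proof (induction a arbitrary: w)
  case Nil then show ?case by simp
next
  case (Cons x rest)
  then obtain u r where "w = u @ r" "wv rest u" "\<forall>v\<in>set r. 1 \<le> v" by auto
  then show ?case using Cons.IH by auto
qed

lemma finite_Wd: "finite (Wd a)"
proof (rule finite_subset)
  show "Wd a \<subseteq> {w. set w \<subseteq> {..4} \<and> length w = sum_list a}"
    using wv_length by (auto simp: Wd_def)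
  show "finite {w. set w \<subseteq> {..4::nat} \<and> length w = sum_list a}"
    by (rule finite_lists_length_eq) simp
qed

lemma Wd_last: "\<forall>p\<in>set a. 0 < p \<Longrightarrow> a \<noteq> [] \<Longrightarrow> w \<in> Wd a \<Longrightarrow> last w \<in> {1..4}"
proof -
  assume pos: "\<forall>p\<in>set a. 0 < p" and ne: "a \<noteq> []" and w: "w \<in> Wd a"
  have "sum_list a > 0" using ne pos by (cases a) auto
  then have "length w > 0" using wv_length[of a w] w by (simp add: Wd_def)
  then have "w \<noteq> []" by auto
  then have "last w \<in> set w" by simp
  then show ?thesis using w wv_letters[of a w] by (auto simp: Wd_def)
qed

lemma total_st:
  assumes pos: "\<forall>p\<in>set a. 0 < p" and ne: "a \<noteq> []"
  shows "(\<Sum>w\<in>Wd a. g (mb w)) = (\<Sum>u\<in>{1..4}. st a g u)"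
proof -
  have "last ` Wd a \<subseteq> {1..4}" using Wd_last[OF pos ne] by blast
  then show ?thesis unfolding st_def
    by (intro sum.group[symmetric]) (auto simp: finite_Wd)
qed

lemma mb_snoc: "mb (w @ [v]) = mb w + (if 3 \<le> v then 1 else 0)"
  by (simp add: mb_def)

lemma st_step:
  assumes step: "\<And>w. wv a' w \<longleftrightarrow> (\<exists>w0 v. w = w0 @ [v] \<and> wv a w0 \<and> 1 \<le> v \<and> R (last w0) v)"
    and v: "v \<in> {1..4}" and pos: "\<forall>p\<in>set a. 0 < p" and ne: "a \<noteq> []"
  shows "st a' g v = (\<Sum>u\<in>{1..4}. if R u v then st a (\<lambda>k. g (k + (if 3 \<le> v then 1 else 0))) u else 0)"
proof -
  define d where "d = (if 3 \<le> v then 1 else 0::nat)"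
  define S where "S = {w0 \<in> Wd a. R (last w0) v}"
  have e: "{w\<in>Wd a'. last w = v} = (\<lambda>w0. w0 @ [v]) ` S"
  proof (rule set_eqI)
    fix w show "w \<in> {w\<in>Wd a'. last w = v} \<longleftrightarrow> w \<in> (\<lambda>w0. w0 @ [v]) ` S"
      using v by (auto simp: S_def Wd_def step)
  qed
  have inj: "inj_on (\<lambda>w0. w0 @ [v]) S" by (auto simp: inj_on_def)
  have "st a' g v = (\<Sum>w0\<in>S. g (mb (w0 @ [v])))"
    unfolding st_def e by (simp add: sum.reindex[OF inj])
  also have "\<dots> = (\<Sum>w0\<in>S. g (mb w0 + d))" by (simp add: mb_snoc d_def)
  also have "\<dots> = (\<Sum>u\<in>{1..4}. (\<Sum>w0\<in>{x \<in> S. last x = u}. g (mb w0 + d)))"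
  proof -
    have "last ` S \<subseteq> {1..4}" using Wd_last[OF pos ne] by (auto simp: S_def)
    then show ?thesis by (intro sum.group[symmetric]) (auto simp: S_def finite_Wd)
  qed
  also have "\<dots> = (\<Sum>u\<in>{1..4}. if R u v then st a (\<lambda>k. g (k + d)) u else 0)"
  proof (rule sum.cong[OF refl])
    fix u assume "u \<in> {1..4::nat}"
    show "(\<Sum>w0\<in>{x \<in> S. last x = u}. g (mb w0 + d)) = (if R u v then st a (\<lambda>k. g (k + d)) u else 0)"
    proof (cases "R u v")
      case True
      then have "{x \<in> S. last x = u} = {w\<in>Wd a. last w = u}" by (auto simp: S_def)
      then show ?thesis using True by (simp add: st_def)
    next
      case False
      then have e0: "{x \<in> S. last x = u} = {}" by (auto simp: S_def)
      show ?thesis unfolding e0 using False by simp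
    qed
  qed
  finally show ?thesis unfolding d_def .
qed

lemma st_one: "v \<in> {1..4} \<Longrightarrow> st [1] g v = g (if 3 \<le> v then 1 else 0)"
proof -
  assume v: "v \<in> {1..4}"
  have "{w\<in>Wd [1]. last w = v} = {[v]}" using v by (auto simp: Wd_def wv_one[unfolded One_nat_def] simp del: wv.simps)
  then show ?thesis by (simp add: st_def mb_def)
qed

definition CS :: "nat list \<Rightarrow> (nat \<times> nat) set" where
  "CS a = {(i,j). (i,j) \<in> ribbon_boxes a \<and> (i-1,j) \<in> ribbon_boxes a \<and> (i+1,j) \<notin> ribbon_boxes a}"

lemma corners_CS: "ribbon_corners a = card (CS a)"
  by (simp add: ribbon_corners_def CS_def)

lemma finite_boxes: "finite (ribbon_boxes a)"
  using set_bl[of a] by (metis List.finite_set)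

lemma finite_CS: "finite (CS a)"
  by (rule finite_subset[OF _ finite_boxes[of a]]) (auto simp: CS_def)

lemma CS_i: "(i,j) \<in> CS a \<Longrightarrow> 2 \<le> i"
proof -
  assume h: "(i,j) \<in> CS a"
  then have "1 \<le> i" "1 \<le> i - 1" using box_i[of i j a] box_i[of "i-1" j a] by (auto simp: CS_def)
  then show ?thesis by simp
qed

lemma CS_Cons:
  assumes x: "0 < x" and pos: "\<forall>p\<in>set rest. 0 < p"
  defines "s \<equiv> ribbon_start rest 0"
  shows "CS (x#rest) = (\<lambda>(i,j). (Suc i, j)) ` CS rest \<union> {(2,s) | _::unit. (1,s) \<in> ribbon_boxes rest \<and> (2,s) \<notin> ribbon_boxes rest}"
proof -
  have shB: "(Suc i, j) \<in> ribbon_boxes (x#rest) \<longleftrightarrow> (i = 0 \<and> s \<le> j \<and> j < s + x) \<or> (i,j) \<in> ribbon_boxes rest" for i j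
    unfolding boxes_Cons s_def by auto
  have zB: "(0, j) \<notin> ribbon_boxes b" for j b using box_i by fastforce
  have colle: "(i,j) \<in> ribbon_boxes rest \<Longrightarrow> j \<le> s" for i j using box_col_le[OF pos] s_def by blast
  have pt: "(i,j) \<in> CS (x#rest) \<longleftrightarrow> (i,j) \<in> (\<lambda>(i,j). (Suc i, j)) ` CS rest \<union> {(2,s) | _::unit. (1,s) \<in> ribbon_boxes rest \<and> (2,s) \<notin> ribbon_boxes rest}" for i j
  proof -
    have im: "(i,j) \<in> (\<lambda>(i,j). (Suc i, j)) ` CS rest \<longleftrightarrow> i \<noteq> 0 \<and> (i - 1, j) \<in> CS rest"
      by (cases i) force+
    consider "i = 0" | "i = 1" | "i = 2" | k where "i = Suc (Suc (Suc k))"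
      by (metis One_nat_def Suc_1 not0_implies_Suc)
    then show ?thesis
    proof cases
      case 1 then show ?thesis using zB CS_i[of 0 j] im by (auto simp: CS_def)
    next
      case 2 then show ?thesis using zB CS_i[of 0 j rest] im by (auto simp: CS_def)
    next
      case 3
      have "(2,j) \<in> CS (x#rest) \<longleftrightarrow> (1,j) \<in> ribbon_boxes rest \<and> s \<le> j \<and> j < s + x \<and> (2,j) \<notin> ribbon_boxes rest"
        using shB[of 1 j] shB[of 0 j] shB[of 2 j] zB[of j rest] by (auto simp: CS_def numeral_2_eq_2 numeral_3_eq_3)
      also have "\<dots> \<longleftrightarrow> j = s \<and> (1,s) \<in> ribbon_boxes rest \<and> (2,s) \<notin> ribbon_boxes rest"
        using colle[of 1 j] x by auto
      finally show ?thesis using 3 im CS_i[of 1 j rest] by auto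
    next
      case 4
      have "(i,j) \<in> CS (x#rest) \<longleftrightarrow> (i - 1,j) \<in> CS rest"
        using 4 shB[of "Suc (Suc k)" j] shB[of "Suc k" j] shB[of "Suc (Suc (Suc k))" j] by (simp add: CS_def)
      then show ?thesis using 4 im by auto
    qed
  qed
  show ?thesis by (rule set_eqI) (metis pt surj_pair)
qed

lemma corners_Cons:
  assumes x: "0 < x" and pos: "\<forall>p\<in>set rest. 0 < p"
  shows "ribbon_corners (x#rest) = ribbon_corners rest + (if rest \<noteq> [] \<and> \<not> (tl rest \<noteq> [] \<and> hd rest = 1) then 1 else 0)"
proof -
  define s where "s = ribbon_start rest 0"
  define E where "E = {(2::nat,s) | _::unit. (1,s) \<in> ribbon_boxes rest \<and> (2,s) \<notin> ribbon_boxes rest}"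
  have C: "CS (x#rest) = (\<lambda>(i,j). (Suc i, j)) ` CS rest \<union> E"
    using CS_Cons[OF x pos] by (simp add: s_def E_def)
  have inj: "inj_on (\<lambda>(i,j). (Suc i, j)) (CS rest)" by (auto simp: inj_on_def)
  have disj: "(\<lambda>(i,j). (Suc i, j)) ` CS rest \<inter> E = {}"
    using CS_i by (fastforce simp: E_def)
  have cE: "card E = (if rest \<noteq> [] \<and> \<not> (tl rest \<noteq> [] \<and> hd rest = 1) then 1 else 0)"
  proof (cases rest)
    case Nil then show ?thesis by (simp add: E_def boxes_Nil)
  next
    case (Cons y r')
    have y: "0 < y" using pos Cons by simp
    have s1: "(1,s) \<in> ribbon_boxes rest" using top_right[OF y, of r'] Cons s_def by simp
    have sE: "s = (y - 1) + ribbon_start r' 0" using Cons s_def rs_Cons_0 by simp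
    have "(2,s) \<in> ribbon_boxes rest \<longleftrightarrow> (1,s) \<in> ribbon_boxes r'"
      unfolding Cons boxes_Cons by (auto simp: numeral_2_eq_2)
    also have "\<dots> \<longleftrightarrow> r' \<noteq> [] \<and> y = 1"
    proof
      assume h: "(1,s) \<in> ribbon_boxes r'"
      then have "r' \<noteq> []" by (auto simp: boxes_Nil)
      moreover have "s \<le> ribbon_start r' 0" using box_col_le[of r' 1 s] h pos Cons by simp
      ultimately show "r' \<noteq> [] \<and> y = 1" using sE y by simp
    next
      assume h: "r' \<noteq> [] \<and> y = 1"
      then obtain z r'' where "r' = z # r''" by (cases r') auto
      moreover have "0 < z" using pos Cons \<open>r' = z # r''\<close> by simp
      ultimately show "(1,s) \<in> ribbon_boxes r'" using top_right sE h by simp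
    qed
    finally have "E = (if r' \<noteq> [] \<and> y = 1 then {} else {(2,s)})" using s1 by (auto simp: E_def)
    then show ?thesis using Cons by simp
  qed
  have "card (CS (x#rest)) = card (CS rest) + card E"
    unfolding C using card_Un_disjoint[OF finite_imageI[OF finite_CS] _ disj] card_image[OF inj]
    by (simp add: E_def)
  then show ?thesis using cE by (simp add: corners_CS)
qed

lemma sum14: "(\<Sum>u\<in>{1..4::nat}. f u) = f 1 + f 2 + f 3 + f 4"
proof -
  have "{1..4::nat} = {1,2,3,4}" by auto
  then show ?thesis by (simp add: add.assoc)
qed

lemma sum14': "(\<Sum>u\<in>{Suc 0..4::nat}. f u) = f (Suc 0) + f 2 + f 3 + f 4"
  using sum14[of f] by simp

lemma stepH:
  assumes x: "0 < x" and pos: "\<forall>p\<in>set rest. 0 < p"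
  shows "st (Suc x#rest) g 1 = 0"
    "st (Suc x#rest) g 2 = st (x#rest) g 1 + st (x#rest) g 2"
    "st (Suc x#rest) g 3 = st (x#rest) (\<lambda>k. g (k+1)) 1 + st (x#rest) (\<lambda>k. g (k+1)) 2"
    "st (Suc x#rest) g 4 = st (x#rest) (\<lambda>k. g (k+1)) 1 + st (x#rest) (\<lambda>k. g (k+1)) 2
        + st (x#rest) (\<lambda>k. g (k+1)) 3 + st (x#rest) (\<lambda>k. g (k+1)) 4"
proof -
  have pa: "\<forall>p\<in>set (x#rest). 0 < p" using x pos by simp
  have n: "x # rest \<noteq> []" by simp
  note S0 = st_step[of "Suc x # rest" "x#rest" hok, OF wv_H[OF x] _ pa n]
  have S: "st (Suc x # rest) g v = (\<Sum>u\<in>{1..4}. if hok u v then st (x#rest) (\<lambda>k. g (k + (if 3 \<le> v then 1 else 0))) u else 0)"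
    if "v \<in> {1..4}" for v g using S0[OF that] .
  show "st (Suc x#rest) g 1 = 0" using S[of 1 g] by (simp add: sum14 sum14' hok_def)
  show "st (Suc x#rest) g 2 = st (x#rest) g 1 + st (x#rest) g 2" using S[of 2 g] by (simp add: sum14 sum14' hok_def)
  show "st (Suc x#rest) g 3 = st (x#rest) (\<lambda>k. g (k+1)) 1 + st (x#rest) (\<lambda>k. g (k+1)) 2" using S[of 3 g] by (simp add: sum14 sum14' hok_def)
  show "st (Suc x#rest) g 4 = st (x#rest) (\<lambda>k. g (k+1)) 1 + st (x#rest) (\<lambda>k. g (k+1)) 2
        + st (x#rest) (\<lambda>k. g (k+1)) 3 + st (x#rest) (\<lambda>k. g (k+1)) 4" using S[of 4 g] by (simp add: sum14 sum14' hok_def)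
qed

lemma stepV:
  assumes ne: "a \<noteq> []" and pos: "\<forall>p\<in>set a. 0 < p"
  shows "st (1#a) g 1 = st a g 1 + st a g 2 + st a g 3 + st a g 4"
    "st (1#a) g 2 = st a g 3 + st a g 4"
    "st (1#a) g 3 = st a (\<lambda>k. g (k+1)) 3 + st a (\<lambda>k. g (k+1)) 4"
    "st (1#a) g 4 = 0"
proof -
  note S0 = st_step[of "1 # a" a vok, OF wv_V[OF ne pos] _ pos ne]
  have S: "st (1 # a) g v = (\<Sum>u\<in>{1..4}. if vok u v then st a (\<lambda>k. g (k + (if 3 \<le> v then 1 else 0))) u else 0)"
    if "v \<in> {1..4}" for v g using S0[OF that] .
  show "st (1#a) g 1 = st a g 1 + st a g 2 + st a g 3 + st a g 4" using S[of 1 g] by (simp add: sum14 sum14' vok_def)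
  show "st (1#a) g 2 = st a g 3 + st a g 4" using S[of 2 g] by (simp add: sum14 sum14' vok_def)
  show "st (1#a) g 3 = st a (\<lambda>k. g (k+1)) 3 + st a (\<lambda>k. g (k+1)) 4" using S[of 3 g] by (simp add: sum14 sum14' vok_def)
  show "st (1#a) g 4 = 0" using S[of 4 g] by (simp add: sum14 sum14' vok_def)
qed

definition g0 :: "nat \<Rightarrow> real" where "g0 k = (if k = 0 then 1 else 0)"
definition g1 :: "nat \<Rightarrow> real" where "g1 k = (if k = 1 then 1 else 0)"
definition gS :: "nat \<Rightarrow> real" where "gS k = (-1) ^ k"
definition gW :: "nat \<Rightarrow> real" where "gW k = real k * (-1) ^ (k + 1)"

lemma sh0: "(\<lambda>k. g0 (Suc k)) = (\<lambda>k. 0)" by (simp add: g0_def)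
lemma sh1: "(\<lambda>k. g1 (Suc k)) = g0" by (auto simp: g0_def g1_def)
lemma shS: "(\<lambda>k. gS (Suc k)) = (\<lambda>k. - gS k)" by (simp add: gS_def)
lemma shW: "(\<lambda>k. gW (Suc k)) = (\<lambda>k. gS k - gW k)"
  by (rule ext) (simp add: gS_def gW_def algebra_simps)

lemma st_zero: "st a (\<lambda>k. 0) u = 0" by (simp add: st_def)
lemma st_neg: "st a (\<lambda>k. - f k) u = - st a f u" by (simp add: st_def sum_negf)
lemma st_diff: "st a (\<lambda>k. f k - h k) u = st a f u - st a h u" by (simp add: st_def sum_subtractf)

definition Cb :: "nat list \<Rightarrow> real" where
  "Cb a = (if 2 \<le> hd a then 4 else if length a = 1 then 2 else 0)"
definition Cs :: "nat list \<Rightarrow> real" where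
  "Cs a = 8 * real (ribbon_corners a) - (if 2 \<le> length a \<and> last a = 1 then 4 else 0)"

definition Inv :: "nat list \<Rightarrow> bool" where
  "Inv a \<longleftrightarrow> st a g0 1 + st a g0 2 = 2 \<and> st a g0 3 = 0 \<and> st a g0 4 = 0
    \<and> st a g1 3 + st a g1 4 = Cb a \<and> st a g1 1 + st a g1 2 = Cs a
    \<and> st a gS 1 + st a gS 2 + st a gS 3 + st a gS 4 = 0 \<and> st a gS 3 + st a gS 4 = 2 * (-1) ^ length a
    \<and> st a gW 1 + st a gW 2 + st a gW 3 + st a gW 4 = (if odd (sum_list a) then 2 * (-1) ^ (length a + 1) else 0)"

lemma corners_Nil: "ribbon_corners [] = 0"
  by (simp add: corners_CS CS_def boxes_Nil)

lemma corners_single: "0 < x \<Longrightarrow> ribbon_corners [x] = 0"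
  using corners_Cons[of x "[]"] corners_Nil by simp

lemma Inv_one: "Inv [1]"
proof -
  have "ribbon_corners [1] = 0" by (rule corners_single) simp
  then show ?thesis
    by (simp add: Inv_def st_one[simplified] g0_def g1_def gS_def gW_def Cb_def Cs_def)
qed

lemma Inv_H:
  assumes x: "0 < x" and pos: "\<forall>p\<in>set rest. 0 < p" and I: "Inv (x#rest)"
  shows "Inv (Suc x # rest)"
proof -
  note H = stepH[OF x pos, simplified]
  have cb: "Cb (Suc x # rest) = 4" using x by (simp add: Cb_def)
  have cs: "Cs (Suc x # rest) = Cs (x # rest)"
  proof -
    have c1: "ribbon_corners (Suc x # rest) = ribbon_corners (x # rest)"
      using corners_Cons[OF x pos] corners_Cons[of "Suc x" rest] pos by simp
    have l: "(2 \<le> length (Suc x#rest) \<and> last (Suc x#rest) = 1) = (2 \<le> length (x#rest) \<and> last (x#rest) = 1)"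
      by (cases rest) auto
    show ?thesis unfolding Cs_def using c1 l by simp
  qed
  show ?thesis using I unfolding Inv_def
    by (simp add: H sh0 sh1 shS shW st_zero st_neg st_diff cb cs) (auto simp: algebra_simps)
qed

lemma Inv_V:
  assumes ne: "a \<noteq> []" and pos: "\<forall>p\<in>set a. 0 < p" and I: "Inv a"
  shows "Inv (1 # a)"
proof -
  note V = stepV[OF ne pos, simplified]
  have cb: "Cb (1 # a) = 0" using ne by (simp add: Cb_def)
  obtain y r where a: "a = y # r" using ne by (cases a) auto
  have y: "0 < y" using pos a by simp
  have cs: "Cs (1 # a) = Cs a + 2 * Cb a"
  proof -
    have c: "ribbon_corners (1 # a) = ribbon_corners a + (if \<not> (r \<noteq> [] \<and> y = 1) then 1 else 0)"
      using corners_Cons[of 1 a] pos a by simp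
    show ?thesis
    proof (cases r)
      case Nil then show ?thesis using c a y by (auto simp: Cs_def Cb_def)
    next
      case (Cons z r') then show ?thesis using c a y by (auto simp: Cs_def Cb_def)
    qed
  qed
  show ?thesis using I unfolding Inv_def
    by (simp add: V sh0 sh1 shS shW st_zero st_neg st_diff cb[simplified] cs[simplified])
qed

lemma comp_induct:
  assumes P1: "P [1]"
    and PH: "\<And>x rest. 0 < x \<Longrightarrow> \<forall>p\<in>set rest. 0 < p \<Longrightarrow> P (x#rest) \<Longrightarrow> P (Suc x # rest)"
    and PV: "\<And>a. a \<noteq> [] \<Longrightarrow> \<forall>p\<in>set a. 0 < p \<Longrightarrow> P a \<Longrightarrow> P (1 # a)"
  shows "a \<noteq> [] \<Longrightarrow> \<forall>p\<in>set a. 0 < p \<Longrightarrow> P a"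
proof (induction a)
  case Nil then show ?case by simp
next
  case (Cons x rest)
  have pos: "\<forall>p\<in>set rest. 0 < p" using Cons.prems by simp
  have start: "P (1 # rest)"
  proof (cases "rest = []")
    case True then show ?thesis using P1 by simp
  next
    case False then show ?thesis using PV Cons.IH pos by blast
  qed
  have "\<forall>x'. P (Suc x' # rest)"
  proof
    fix x' show "P (Suc x' # rest)"
    proof (induction x')
      case 0 then show ?case using start by simp
    next
      case (Suc n) then show ?case using PH[of "Suc n" rest] pos by simp
    qed
  qed
  moreover have "0 < x" using Cons.prems by simp
  ultimately show ?case by (metis Suc_pred)
qed

lemma Inv_all: "a \<noteq> [] \<Longrightarrow> \<forall>p\<in>set a. 0 < p \<Longrightarrow> Inv a"
  by (rule comp_induct[of Inv, OF Inv_one Inv_H Inv_V])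

definition sj :: "nat list \<Rightarrow> nat list \<Rightarrow> nat \<Rightarrow> nat" where
  "sj lam vs k = (\<Sum>i\<in>{i. i < length lam \<and> vs ! i = k}. lam ! i)"

definition VV :: "nat \<Rightarrow> nat list set" where
  "VV m = {vs. length vs = m \<and> set vs \<subseteq> {1,2}}"

lemma finite_VV: "finite (VV m)"
proof -
  have "VV m = {xs. set xs \<subseteq> {1,2} \<and> length xs = m}" by (auto simp: VV_def)
  then show ?thesis using finite_lists_length_eq[of "{1,2::nat}" m] by simp
qed

lemma sj_Nil: "sj [] vs k = 0" by (simp add: sj_def)

lemma sj_Cons: "sj (p#lam) (v#vs) k = (if v = k then p else 0) + sj lam vs k"
proof -
  have e: "{i. i < length (p#lam) \<and> (v#vs) ! i = k} = (if v = k then {0} else {}) \<union> Suc ` {i. i < length lam \<and> vs ! i = k}"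
    by (auto simp: nth_Cons' image_iff less_Suc_eq_0_disj)
  have "sj (p#lam) (v#vs) k = (\<Sum>i\<in>(if v = k then {0} else {}) \<union> Suc ` {i. i < length lam \<and> vs ! i = k}. (p#lam) ! i)"
    unfolding sj_def e ..
  also have "\<dots> = (\<Sum>i\<in>(if v = k then {0} else {}). (p#lam) ! i) + (\<Sum>i\<in>Suc ` {i. i < length lam \<and> vs ! i = k}. (p#lam) ! i)"
    by (rule sum.union_disjoint) auto
  also have "(\<Sum>i\<in>Suc ` {i. i < length lam \<and> vs ! i = k}. (p#lam) ! i) = sj lam vs k"
    by (simp add: sum.reindex sj_def)
  finally show ?thesis by simp
qed

lemma VV_Suc: "VV (Suc m) = (\<lambda>vs. 1 # vs) ` VV m \<union> (\<lambda>vs. 2 # vs) ` VV m"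
proof (rule set_eqI)
  fix vs show "vs \<in> VV (Suc m) \<longleftrightarrow> vs \<in> (\<lambda>vs. 1 # vs) ` VV m \<union> (\<lambda>vs. 2 # vs) ` VV m"
    by (cases vs) (auto simp: VV_def)
qed

definition EE :: "nat list \<Rightarrow> (nat \<Rightarrow> real) \<Rightarrow> real" where
  "EE lam g = (\<Sum>vs\<in>VV (length lam). g (sj lam vs 2))"

lemma EE_Nil: "EE [] g = g 0"
proof -
  have "VV 0 = {[]}" by (auto simp: VV_def)
  then show ?thesis by (simp add: EE_def sj_Nil)
qed

lemma EE_Cons: "EE (p#lam) g = EE lam g + EE lam (\<lambda>k. g (p + k))"
proof -
  have d: "(\<lambda>vs. 1 # vs) ` VV (length lam) \<inter> (\<lambda>vs. 2 # vs) ` VV (length lam) = {}" by auto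
  have "EE (p#lam) g = (\<Sum>vs\<in>(\<lambda>vs. 1 # vs) ` VV (length lam). g (sj (p#lam) vs 2))
      + (\<Sum>vs\<in>(\<lambda>vs. 2 # vs) ` VV (length lam). g (sj (p#lam) vs 2))"
    unfolding EE_def length_Cons VV_Suc by (rule sum.union_disjoint) (auto simp: finite_VV)
  also have "\<dots> = EE lam g + EE lam (\<lambda>k. g (p + k))"
    by (simp add: sum.reindex EE_def sj_Cons)
  finally show ?thesis .
qed

lemma EE_lin: "EE lam (\<lambda>k. c * f k - h k) = c * EE lam f - EE lam h"
  by (simp add: EE_def sum_subtractf sum_distrib_left)

lemma EE_zero: "EE lam (\<lambda>k. 0) = 0" by (simp add: EE_def)

lemma EE_g0: "\<forall>p\<in>set lam. 0 < p \<Longrightarrow> EE lam g0 = 1"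
proof (induction lam)
  case Nil then show ?case by (simp add: EE_Nil g0_def)
next
  case (Cons p lam)
  have "(\<lambda>k. g0 (p + k)) = (\<lambda>k. 0)" using Cons.prems by (auto simp: g0_def)
  then show ?case using Cons by (simp add: EE_Cons EE_zero)
qed

lemma EE_g1: "\<forall>p\<in>set lam. 0 < p \<Longrightarrow> EE lam g1 = real (count_list lam 1)"
proof (induction lam)
  case Nil then show ?case by (simp add: EE_Nil g1_def)
next
  case (Cons p lam)
  show ?case
  proof (cases "p = 1")
    case True
    have "(\<lambda>k. g1 (p + k)) = g0" using True by (auto simp: g0_def g1_def)
    then show ?thesis using Cons EE_g0[of lam] True by (simp add: EE_Cons)
  next
    case False
    have "(\<lambda>k. g1 (p + k)) = (\<lambda>k. 0)" using False Cons.prems by (auto simp: g1_def)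
    then show ?thesis using Cons False by (simp add: EE_Cons EE_zero)
  qed
qed

lemma EE_gS: "\<forall>p\<in>set lam. odd p \<Longrightarrow> EE lam gS = (if lam = [] then 1 else 0)"
proof (induction lam)
  case Nil then show ?case by (simp add: EE_Nil gS_def)
next
  case (Cons p lam)
  have "(\<lambda>k. gS (p + k)) = (\<lambda>k. - gS k)" using Cons.prems by (auto simp: gS_def power_add)
  then have "EE lam (\<lambda>k. gS (p + k)) = - EE lam gS" by (simp add: EE_def sum_negf)
  then show ?case by (simp add: EE_Cons)
qed

lemma EE_gW: "\<forall>p\<in>set lam. odd p \<Longrightarrow> EE lam gW = (if length lam = 1 then real (hd lam) else 0)"
proof (induction lam)
  case Nil then show ?case by (simp add: EE_Nil gW_def)
next
  case (Cons p lam)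
  have "(\<lambda>k. gW (p + k)) = (\<lambda>k. real p * gS k - gW k)"
    using Cons.prems by (auto simp: gW_def gS_def power_add algebra_simps)
  then have "EE lam (\<lambda>k. gW (p + k)) = real p * EE lam gS - EE lam gW" by (simp add: EE_lin)
  then show ?case using EE_gS[of lam] Cons.prems by (simp add: EE_Cons)
qed

lemma sj_12: "length vs = length lam \<Longrightarrow> set vs \<subseteq> {1,2} \<Longrightarrow> sj lam vs 1 + sj lam vs 2 = sum_list lam"
proof (induction lam arbitrary: vs)
  case Nil then show ?case by (simp add: sj_Nil)
next
  case (Cons p lam)
  then obtain v vs' where vs: "vs = v # vs'" by (cases vs) auto
  then have "sj lam vs' 1 + sj lam vs' 2 = sum_list lam" using Cons by simp
  moreover have "v = 1 \<or> v = 2" using Cons.prems vs by auto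
  ultimately show ?case using vs by (auto simp: sj_Cons)
qed

lemma sj_0: "length vs = length lam \<Longrightarrow> set vs \<subseteq> {1,2} \<Longrightarrow> k \<noteq> 1 \<Longrightarrow> k \<noteq> 2 \<Longrightarrow> sj lam vs k = 0"
proof -
  assume a: "length vs = length lam" "set vs \<subseteq> {1,2}" "k \<noteq> 1" "k \<noteq> 2"
  have e: "{i. i < length lam \<and> vs ! i = k} = {}"
  proof (rule ccontr)
    assume "{i. i < length lam \<and> vs ! i = k} \<noteq> {}"
    then obtain i where "i < length vs" "vs ! i = k" using a(1) by auto
    then have "k \<in> set vs" by (metis nth_mem)
    then show False using a by auto
  qed
  show ?thesis unfolding sj_def e by simp
qed

definition aj :: "nat \<Rightarrow> nat \<Rightarrow> nat \<Rightarrow> nat" where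
  "aj n j = (\<lambda>k. if k = 1 then n - j else if k = 2 then j else 0)"

lemma OP_pos: "lam \<in> odd_partitions n \<Longrightarrow> \<forall>p\<in>set lam. 0 < p"
  by (auto simp: odd_partitions_def intro: odd_pos)

lemma pcoeff_aj:
  assumes lam: "lam \<in> odd_partitions n" and j: "j \<le> n"
  shows "power_sum_coeff lam (aj n j) = card {vs \<in> VV (length lam). sj lam vs 2 = j}"
proof -
  have pos: "\<forall>p\<in>set lam. 0 < p" using OP_pos[OF lam] .
  have sn: "sum_list lam = n" using lam by (simp add: odd_partitions_def)
  have "{vs. length vs = length lam \<and> (\<forall>v\<in>set vs. 1 \<le> v) \<and>
      (\<forall>k. aj n j k = (\<Sum>i\<in>{i. i < length lam \<and> vs ! i = k}. lam ! i))}
    = {vs \<in> VV (length lam). sj lam vs 2 = j}"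
  proof (rule set_eqI, rule iffI)
    fix vs assume "vs \<in> {vs. length vs = length lam \<and> (\<forall>v\<in>set vs. 1 \<le> v) \<and>
      (\<forall>k. aj n j k = (\<Sum>i\<in>{i. i < length lam \<and> vs ! i = k}. lam ! i))}"
    then have l: "length vs = length lam" and one: "\<forall>v\<in>set vs. 1 \<le> v"
      and eq: "\<And>k. aj n j k = sj lam vs k" by (auto simp: sj_def)
    have s12: "set vs \<subseteq> {1,2}"
    proof
      fix v assume v: "v \<in> set vs"
      show "v \<in> {1,2}"
      proof (rule ccontr)
        assume nv: "v \<notin> {1,2}"
        obtain i where i: "i < length vs" "vs ! i = v" using v by (metis in_set_conv_nth)
        have "lam ! i \<le> sj lam vs v" unfolding sj_def
          by (rule member_le_sum) (use i l in auto)
        moreover have "0 < lam ! i" using pos i l by (metis nth_mem)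
        moreover have "aj n j v = 0" using nv by (auto simp: aj_def)
        ultimately show False using eq[of v] by simp
      qed
    qed
    show "vs \<in> {vs \<in> VV (length lam). sj lam vs 2 = j}"
      using l s12 eq[of 2] by (simp add: VV_def aj_def)
  next
    fix vs assume "vs \<in> {vs \<in> VV (length lam). sj lam vs 2 = j}"
    then have l: "length vs = length lam" and s12: "set vs \<subseteq> {1,2}" and e2: "sj lam vs 2 = j"
      by (auto simp: VV_def)
    have "aj n j k = sj lam vs k" for k
    proof -
      consider "k = 1" | "k = 2" | "k \<noteq> 1 \<and> k \<noteq> 2" by blast
      then show ?thesis
      proof cases
        case 1 then show ?thesis using sj_12[OF l s12] e2 sn by (simp add: aj_def)
      next
        case 2 then show ?thesis using e2 by (simp add: aj_def)
      next
        case 3 then show ?thesis using sj_0[OF l s12] by (simp add: aj_def)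
      qed
    qed
    moreover have "\<forall>v\<in>set vs. 1 \<le> v" using s12 by auto
    ultimately show "vs \<in> {vs. length vs = length lam \<and> (\<forall>v\<in>set vs. 1 \<le> v) \<and>
      (\<forall>k. aj n j k = (\<Sum>i\<in>{i. i < length lam \<and> vs ! i = k}. lam ! i))}"
      using l by (simp add: sj_def)
  qed
  then show ?thesis unfolding power_sum_coeff_def by simp
qed

lemma wcont_small: "set w \<subseteq> {1..4} \<Longrightarrow> wcont w k = (if k = 1 then length w - mb w else if k = 2 then mb w else 0)"
proof (induction w)
  case Nil then show ?case by (simp add: wcont_def mb_def)
next
  case (Cons v w)
  have IH: "wcont w k = (if k = 1 then length w - mb w else if k = 2 then mb w else 0)" using Cons by simp
  have le: "mb w \<le> length w" unfolding mb_def by (rule length_filter_le)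
  have v: "v = 1 \<or> v = 2 \<or> v = 3 \<or> v = 4" using Cons.prems by auto
  have wc: "wcont (v#w) k = (if (v + 1) div 2 = k then 1 else 0) + wcont w k" by (simp add: wcont_def)
  have m: "mb (v#w) = (if 3 \<le> v then 1 else 0) + mb w" by (simp add: mb_def)
  show ?case using v IH le unfolding wc m by auto
qed

lemma words_aj:
  assumes pos: "\<forall>p\<in>set a. 0 < p" and j: "j \<le> sum_list a"
  shows "{w. wv a w \<and> (\<forall>k. wcont w k = aj (sum_list a) j k)} = {w \<in> Wd a. mb w = j}"
proof (rule set_eqI, rule iffI)
  fix w assume "w \<in> {w. wv a w \<and> (\<forall>k. wcont w k = aj (sum_list a) j k)}"
  then have wv: "wv a w" and eq: "\<And>k. wcont w k = aj (sum_list a) j k" by auto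
  have s: "set w \<subseteq> {1..4}"
  proof
    fix v assume v: "v \<in> set w"
    have v1: "1 \<le> v" using wv_letters[OF wv] v by blast
    show "v \<in> {1..4}"
    proof (rule ccontr)
      assume "v \<notin> {1..4}"
      then have v5: "5 \<le> v" using v1 by auto
      have "v \<in> set (filter (\<lambda>x. (x + 1) div 2 = (v + 1) div 2) w)" using v by simp
      then have "0 < wcont w ((v + 1) div 2)" unfolding wcont_def by (metis length_pos_if_in_set)
      moreover have "aj (sum_list a) j ((v + 1) div 2) = 0" using v5 by (auto simp: aj_def)
      ultimately show False using eq by simp
    qed
  qed
  then have "mb w = j" using eq[of 2] wcont_small[OF s, of 2] by (simp add: aj_def)
  then show "w \<in> {w \<in> Wd a. mb w = j}" using wv s by (auto simp: Wd_def)
next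
  fix w assume "w \<in> {w \<in> Wd a. mb w = j}"
  then have wv: "wv a w" and s4: "\<forall>v\<in>set w. v \<le> 4" and m: "mb w = j" by (auto simp: Wd_def)
  have s: "set w \<subseteq> {1..4}" using s4 wv_letters[OF wv] by auto
  have l: "length w = sum_list a" using wv_length[OF wv] .
  have "wcont w k = aj (sum_list a) j k" for k using wcont_small[OF s, of k] m l by (simp add: aj_def)
  then show "w \<in> {w. wv a w \<and> (\<forall>k. wcont w k = aj (sum_list a) j k)}" using wv by simp
qed

lemma sum_by_value:
  fixes f :: "'a \<Rightarrow> nat" and g :: "nat \<Rightarrow> real"
  assumes fin: "finite A" and bd: "\<forall>x\<in>A. f x \<le> n"
  shows "(\<Sum>x\<in>A. g (f x)) = (\<Sum>j\<in>{0..n}. g j * real (card {x\<in>A. f x = j}))"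
proof -
  have "(\<Sum>x\<in>A. g (f x)) = (\<Sum>j\<in>{0..n}. \<Sum>x\<in>{x\<in>A. f x = j}. g (f x))"
    by (rule sum.group[symmetric]) (use fin bd in auto)
  also have "\<dots> = (\<Sum>j\<in>{0..n}. g j * real (card {x\<in>A. f x = j}))"
  proof (rule sum.cong[OF refl])
    fix j
    have "(\<Sum>x\<in>{x\<in>A. f x = j}. g (f x)) = (\<Sum>x\<in>{x\<in>A. f x = j}. g j)" by (rule sum.cong) auto
    then show "(\<Sum>x\<in>{x\<in>A. f x = j}. g (f x)) = g j * real (card {x\<in>A. f x = j})" by simp
  qed
  finally show ?thesis .
qed

lemma length_le_sum: "\<forall>p\<in>set l. 0 < p \<Longrightarrow> length l \<le> sum_list (l::nat list)"
  by (induction l) auto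

lemma finite_OP: "finite (odd_partitions n)"
proof (rule finite_subset)
  show "odd_partitions n \<subseteq> {xs. set xs \<subseteq> {0..n} \<and> length xs \<le> n}"
  proof
    fix l assume l: "l \<in> odd_partitions n"
    then have "\<forall>p\<in>set l. 0 < p" by (rule OP_pos)
    moreover have "sum_list l = n" using l by (simp add: odd_partitions_def)
    ultimately show "l \<in> {xs. set xs \<subseteq> {0..n} \<and> length xs \<le> n}"
      using length_le_sum[of l] member_le_sum_list[of _ l] by auto
  qed
  show "finite {xs. set xs \<subseteq> {0..n} \<and> length xs \<le> n}" by (rule finite_lists_length_le) simp
qed

lemma master:
  assumes ne: "alpha \<noteq> []" and pos: "\<forall>p\<in>set alpha. 0 < p" and exp: "is_p_expansion alpha c"
  shows "(\<Sum>lam\<in>odd_partitions (sum_list alpha). c lam * EE lam g)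
     = st alpha g 1 + st alpha g 2 + st alpha g 3 + st alpha g 4"
proof -
  define n where "n = sum_list alpha"
  define N where "N j = real (card {w \<in> Wd alpha. mb w = j})" for j
  define M where "M lam j = real (card {vs \<in> VV (length lam). sj lam vs 2 = j})" for lam j
  have key: "N j = (\<Sum>lam\<in>odd_partitions n. c lam * M lam j)" if j: "j \<le> n" for j
  proof -
    have fs: "finite {k. aj n j k \<noteq> 0}"
      by (rule finite_subset[of _ "{1,2}"]) (auto simp: aj_def split: if_splits)
    have "real (ribbon_coeff alpha (aj n j)) = (\<Sum>lam\<in>odd_partitions n. c lam * real (power_sum_coeff lam (aj n j)))"
      using exp fs unfolding is_p_expansion_def n_def by blast
    moreover have "ribbon_coeff alpha (aj n j) = card {w \<in> Wd alpha. mb w = j}"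
      using ribbon_coeff_words[OF pos] words_aj[OF pos] j n_def by simp
    moreover have "(\<Sum>lam\<in>odd_partitions n. c lam * real (power_sum_coeff lam (aj n j)))
        = (\<Sum>lam\<in>odd_partitions n. c lam * M lam j)"
      by (rule sum.cong[OF refl]) (simp add: pcoeff_aj[OF _ j] M_def)
    ultimately show ?thesis by (simp add: N_def)
  qed
  have EEM: "EE lam g = (\<Sum>j\<in>{0..n}. g j * M lam j)" if lam: "lam \<in> odd_partitions n" for lam
  proof -
    have sn: "sum_list lam = n" using lam by (simp add: odd_partitions_def)
    have "\<forall>vs\<in>VV (length lam). sj lam vs 2 \<le> n"
      using sj_12 sn by (fastforce simp: VV_def)
    then show ?thesis unfolding EE_def M_def by (rule sum_by_value[OF finite_VV])
  qed
  have "(\<Sum>j\<in>{0..n}. g j * N j) = (\<Sum>j\<in>{0..n}. \<Sum>lam\<in>odd_partitions n. c lam * (g j * M lam j))"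
    by (rule sum.cong[OF refl]) (simp add: key sum_distrib_left algebra_simps)
  also have "\<dots> = (\<Sum>lam\<in>odd_partitions n. \<Sum>j\<in>{0..n}. c lam * (g j * M lam j))"
    by (rule sum.swap)
  also have "\<dots> = (\<Sum>lam\<in>odd_partitions n. c lam * EE lam g)"
    by (rule sum.cong[OF refl]) (simp add: EEM sum_distrib_left)
  finally have L: "(\<Sum>j\<in>{0..n}. g j * N j) = (\<Sum>lam\<in>odd_partitions n. c lam * EE lam g)" .
  have "\<forall>w\<in>Wd alpha. mb w \<le> n"
  proof
    fix w assume "w \<in> Wd alpha"
    then have "length w = n" using wv_length n_def by (auto simp: Wd_def)
    then show "mb w \<le> n" unfolding mb_def by (metis length_filter_le)
  qed
  then have "(\<Sum>w\<in>Wd alpha. g (mb w)) = (\<Sum>j\<in>{0..n}. g j * N j)"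
    unfolding N_def by (rule sum_by_value[OF finite_Wd])
  then show ?thesis using L total_st[OF pos ne, of g] sum14[of "st alpha g"] n_def by simp
qed

theorem mainTheorem14:
  fixes alpha :: "nat list" and c :: "nat list \<Rightarrow> real"
  assumes "alpha \<noteq> []" and "\<forall>p\<in>set alpha. 0 < p"
    and "is_p_expansion alpha c"
  shows "(\<Sum>lam\<in>odd_partitions (sum_list alpha). c lam) = 2
    \<and> (odd (sum_list alpha) \<longrightarrow>
         c [sum_list alpha] = (-1) ^ (length alpha + 1) * 2 / real (sum_list alpha))
    \<and> (alpha ! 0 = 1 \<and> alpha ! (length alpha - 1) > 1 \<longrightarrow>
         (\<Sum>lam\<in>odd_partitions (sum_list alpha). real (count_list lam 1) * c lam)
           = 8 * real (ribbon_corners alpha))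
    \<and> (alpha ! 0 = 1 \<and> alpha ! (length alpha - 1) = 1 \<and> sum_list alpha \<ge> 2 \<longrightarrow>
         (\<Sum>lam\<in>odd_partitions (sum_list alpha). real (count_list lam 1) * c lam)
           = 8 * real (ribbon_corners alpha) - 4)"
proof -
  note ne = assms(1) and pos = assms(2) and exp = assms(3)
  define n where "n = sum_list alpha"
  have I: "Inv alpha" using Inv_all[OF ne pos] .
  note M = master[OF ne pos exp]
  have A: "(\<Sum>lam\<in>odd_partitions n. c lam) = 2"
  proof -
    have "(\<Sum>lam\<in>odd_partitions n. c lam) = (\<Sum>lam\<in>odd_partitions n. c lam * EE lam g0)"
      by (rule sum.cong[OF refl]) (simp add: EE_g0[OF OP_pos])
    also have "\<dots> = 2" using M[of g0] I n_def by (simp add: Inv_def)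
    finally show ?thesis .
  qed
  have C: "(\<Sum>lam\<in>odd_partitions n. real (count_list lam 1) * c lam) = Cs alpha + Cb alpha"
  proof -
    have "(\<Sum>lam\<in>odd_partitions n. real (count_list lam 1) * c lam) = (\<Sum>lam\<in>odd_partitions n. c lam * EE lam g1)"
      by (rule sum.cong[OF refl]) (simp add: EE_g1[OF OP_pos])
    also have "\<dots> = Cs alpha + Cb alpha" using M[of g1] I n_def by (simp add: Inv_def)
    finally show ?thesis .
  qed
  have B: "odd n \<Longrightarrow> c [n] = (-1) ^ (length alpha + 1) * 2 / real n"
  proof -
    assume o: "odd n"
    have oddp: "\<forall>p\<in>set lam. odd p" if "lam \<in> odd_partitions n" for lam
      using that by (simp add: odd_partitions_def)
    have "(\<Sum>lam\<in>odd_partitions n. c lam * EE lam gW) = (\<Sum>lam\<in>odd_partitions n. if lam = [n] then c lam * real n else 0)"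
    proof (rule sum.cong[OF refl])
      fix lam assume l: "lam \<in> odd_partitions n"
      have "EE lam gW = (if length lam = 1 then real (hd lam) else 0)" using EE_gW[OF oddp[OF l]] .
      moreover have "length lam = 1 \<longleftrightarrow> lam = [n]"
      proof
        assume "length lam = 1"
        then obtain p where "lam = [p]" by (metis One_nat_def length_0_conv length_Suc_conv)
        then show "lam = [n]" using l by (simp add: odd_partitions_def)
      qed simp
      ultimately show "c lam * EE lam gW = (if lam = [n] then c lam * real n else 0)" by auto
    qed
    also have "\<dots> = c [n] * real n"
    proof -
      have "[n] \<in> odd_partitions n" using o by (simp add: odd_partitions_def)
      then show ?thesis by (simp add: sum.delta[OF finite_OP])
    qed
    finally have "c [n] * real n = 2 * (-1) ^ (length alpha + 1)"
      using M[of gW] I n_def o by (simp add: Inv_def)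
    moreover have "0 < n" using o by (cases n) auto
    ultimately show ?thesis by (simp add: field_simps)
  qed
  have hd0: "alpha ! 0 = hd alpha" using ne by (simp add: hd_conv_nth)
  have lst: "alpha ! (length alpha - 1) = last alpha" using ne by (simp add: last_conv_nth)
  have D1: "alpha ! 0 = 1 \<and> alpha ! (length alpha - 1) > 1 \<longrightarrow>
         (\<Sum>lam\<in>odd_partitions n. real (count_list lam 1) * c lam) = 8 * real (ribbon_corners alpha)"
  proof
    assume h: "alpha ! 0 = 1 \<and> alpha ! (length alpha - 1) > 1"
    then have "hd alpha = 1" "last alpha > 1" using hd0 lst by auto
    moreover have "length alpha \<noteq> 1"
    proof
      assume "length alpha = 1"
      then obtain y where "alpha = [y]" by (metis One_nat_def length_0_conv length_Suc_conv)
      then show False using \<open>hd alpha = 1\<close> \<open>last alpha > 1\<close> by simp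
    qed
    ultimately show "(\<Sum>lam\<in>odd_partitions n. real (count_list lam 1) * c lam) = 8 * real (ribbon_corners alpha)"
      using C by (simp add: Cs_def Cb_def)
  qed
  have D2: "alpha ! 0 = 1 \<and> alpha ! (length alpha - 1) = 1 \<and> n \<ge> 2 \<longrightarrow>
         (\<Sum>lam\<in>odd_partitions n. real (count_list lam 1) * c lam) = 8 * real (ribbon_corners alpha) - 4"
  proof
    assume h: "alpha ! 0 = 1 \<and> alpha ! (length alpha - 1) = 1 \<and> n \<ge> 2"
    then have "hd alpha = 1" "last alpha = 1" using hd0 lst by auto
    moreover have "length alpha \<noteq> 1"
    proof
      assume "length alpha = 1"
      then obtain y where "alpha = [y]" by (metis One_nat_def length_0_conv length_Suc_conv)
      then show False using \<open>hd alpha = 1\<close> h n_def by simp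
    qed
    moreover have "length alpha \<noteq> 0" using ne by simp
    ultimately have "2 \<le> length alpha" "hd alpha = 1" "last alpha = 1" by linarith+
    then show "(\<Sum>lam\<in>odd_partitions n. real (count_list lam 1) * c lam) = 8 * real (ribbon_corners alpha) - 4"
      using C by (simp add: Cs_def Cb_def)
  qed
  show ?thesis using A B D1 D2 n_def by simp
qed

end
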